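(* Let $\mathbf{A}$ be an $n\times n$ real symmetric matrix, let $a\le\lambda_{\min}[\mathbf{A}]$ and $b\ge\lambda_{\max}[\mathbf{A}]$, and let $\mathbf{v}_1,\dots,\mathbf{v}_{n_{\mathrm{v}}}$ be unit vectors. Set $\Psi_i=\Psi[\mathbf{A},\mathbf{v}_i]$ and, for each $i$, let $[\theta_i]_1\le\cdots\le[\theta_i]_k$ be the eigenvalues of the $k\times k$ Lanczos tridiagonal matrix $\mathbf{T}_i$ obtained from $\mathbf{A},\mathbf{v}_i$, and $[d_i]_1,\dots,[d_i]_k$ the squares of the first components of the corresponding normalized eigenvectors, so that $\mathrm{GQ}_k(\Psi_i)(x)=\sum_{j=1}^k[d_i]_j\mathbb{1}[[\theta_i]_j\le x]$. Set $[\theta_i]_0=a$, $[\theta_i]_{k+1}=b$, $[d_i]_0=[d_i]_{k+1}=0$. Writing $\langle x_i\rangle=\frac1{n_{\mathrm{v}}}\sum_{i=1}^{n_{\mathrm{v}}}x_i$, we have $$d_{\mathrm{KS}}\big(\langle\Psi_i\rangle,\langle\mathrm{GQ}_k(\Psi_i)\rangle\big)\le\Big\langle\max_{j=1,\dots,k}[d_i]_j\Big\rangle,$$ $$d_{\mathrm{W}}\big(\langle\Psi_i\rangle,\langle\mathrm{GQ}_k(\Psi_i)\rangle\big)\le\Big\langle\sum_{j=0}^{k}\max\{[d_i]_j,[d_i]_{j+1}\}\big([\theta_i]_{j+1}-[\theta_i]_j\big)\Big\rangle.$$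
   Context: For a symmetric matrix $\mathbf{A}$, $\mathbb{1}[\mathbf{A}\le x]$ is the orthogonal projector onto the span of eigenvectors with eigenvalues $\le x$, and the weighted CESM of a unit vector $\mathbf{v}$ is $\Psi[\mathbf{A},\mathbf{v}](x)=\mathbf{v}^{\mathsf T}\mathbb{1}[\mathbf{A}\le x]\mathbf{v}$. $\mathrm{GQ}_k(\mu)$ denotes the $k$-point Gaussian quadrature rule of a distribution $\mu$: the distribution with $k$ atoms matching the moments of $\mu$ up to degree $2k-1$; for $\mu=\Psi[\mathbf{A},\mathbf{v}]$ it is given by the eigenvalues and squared first eigenvector components of the $k$-step Lanczos tridiagonal matrix as described. $d_{\mathrm{KS}}(\mu,\nu)=\sup_x|\mu(x)-\nu(x)|$ and $d_{\mathrm{W}}(\mu,\nu)=\int|\mu(x)-\nu(x)|\,dx$. *)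

theory Defs
  imports "HOL-Analysis.Analysis"
begin

text \<open>Eigenvectors of A with eigenvalue at most x (together with 0), and their span.\<close>
definition eigvecs_le :: "real^'n^'n \<Rightarrow> real \<Rightarrow> (real^'n) set" where
  "eigvecs_le A x = {u. \<exists>c. c \<le> x \<and> A *v u = c *\<^sub>R u}"

definition espace_le :: "real^'n^'n \<Rightarrow> real \<Rightarrow> (real^'n) set" where
  "espace_le A x = span (eigvecs_le A x)"

text \<open>Orthogonal projector 1[A <= x] applied to v.\<close>
definition spec_proj :: "real^'n^'n \<Rightarrow> real \<Rightarrow> real^'n \<Rightarrow> real^'n" where
  "spec_proj A x v = (THE w. w \<in> espace_le A x \<and> (\<forall>u\<in>espace_le A x. (v - w) \<bullet> u = 0))"

text \<open>Weighted CESM Psi[A,v](x) = v^T 1[A <= x] v.\<close>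
definition cesm :: "real^'n^'n \<Rightarrow> real^'n \<Rightarrow> real \<Rightarrow> real" where
  "cesm A v x = v \<bullet> spec_proj A x v"

text \<open>Distribution function of the atomic measure with nodes theta_1..theta_k, weights d_1..d_k.\<close>
definition atomic_cdf :: "nat \<Rightarrow> (nat \<Rightarrow> real) \<Rightarrow> (nat \<Rightarrow> real) \<Rightarrow> real \<Rightarrow> real" where
  "atomic_cdf k \<theta> d x = (\<Sum>j=1..k. d j * (if \<theta> j \<le> x then 1 else 0))"

text \<open>(theta,d) is the k-point Gaussian quadrature rule GQ_k(Psi[A,v]): k distinct atoms
  with positive weights whose moments of degree 0..2k-1 match those of Psi[A,v],
  i.e. v^T A^m v.\<close>
definition is_gauss_quad :: "nat \<Rightarrow> real^'n^'n \<Rightarrow> real^'n \<Rightarrow> (nat \<Rightarrow> real) \<Rightarrow> (nat \<Rightarrow> real) \<Rightarrow> bool" where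
  "is_gauss_quad k A v \<theta> d \<longleftrightarrow>
     (\<forall>j\<in>{1..<k}. \<theta> j < \<theta> (Suc j)) \<and> (\<forall>j\<in>{1..k}. d j > 0) \<and>
     (\<forall>m<2*k. (\<Sum>j=1..k. d j * \<theta> j ^ m) = v \<bullet> (((*v) A ^^ m) v))"

definition d_KS :: "(real \<Rightarrow> real) \<Rightarrow> (real \<Rightarrow> real) \<Rightarrow> ereal" where
  "d_KS \<mu> \<nu> = (SUP x. ereal \<bar>\<mu> x - \<nu> x\<bar>)"

definition d_W :: "(real \<Rightarrow> real) \<Rightarrow> (real \<Rightarrow> real) \<Rightarrow> ennreal" where
  "d_W \<mu> \<nu> = (\<integral>\<^sup>+ x. ennreal \<bar>\<mu> x - \<nu> x\<bar> \<partial>lborel)"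

end

theory Submission
  imports Defs "HOL-Computational_Algebra.Polynomial"
begin


locale gq =
  fixes k :: nat and th d :: "nat \<Rightarrow> real" and L :: "real set" and w :: "real \<Rightarrow> real"
  assumes k1: "k \<ge> 1"
    and incr: "\<forall>j\<in>{1..<k}. th j < th (Suc j)"
    and dpos: "\<forall>j\<in>{1..k}. d j > 0"
    and finL: "finite L" and wnn: "\<forall>x\<in>L. w x \<ge> 0"
    and mom: "\<forall>m<2*k. (\<Sum>j=1..k. d j * th j ^ m) = (\<Sum>x\<in>L. w x * x ^ m)"
begin

lemma th_less: "1 \<le> l \<Longrightarrow> l < m \<Longrightarrow> m \<le> k \<Longrightarrow> th l < th m"
proof (induction m)
  case 0 then show ?case by simp
next
  case (Suc m)
  then have "th m < th (Suc m)" using incr by auto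
  then show ?case using Suc by (cases "l = m") auto
qed

lemma th_le: "1 \<le> l \<Longrightarrow> l \<le> m \<Longrightarrow> m \<le> k \<Longrightarrow> th l \<le> th m"
  using th_less by (cases "l = m") (auto intro: less_imp_le)

lemma th_inj: "l \<in> {1..k} \<Longrightarrow> m \<in> {1..k} \<Longrightarrow> th l = th m \<Longrightarrow> l = m"
  using th_less by (metis atLeastAtMost_iff less_irrefl nat_neq_iff)

lemma quad_poly:
  assumes "degree p < 2*k"
  shows "(\<Sum>j=1..k. d j * poly p (th j)) = (\<Sum>x\<in>L. w x * poly p x)"
proof -
  have "(\<Sum>j=1..k. d j * poly p (th j)) = (\<Sum>j=1..k. \<Sum>i\<le>degree p. coeff p i * (d j * th j ^ i))"
    by (simp add: poly_altdef sum_distrib_left mult_ac)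
  also have "\<dots> = (\<Sum>i\<le>degree p. coeff p i * (\<Sum>j=1..k. d j * th j ^ i))"
    by (subst sum.swap) (simp add: sum_distrib_left)
  also have "\<dots> = (\<Sum>i\<le>degree p. coeff p i * (\<Sum>x\<in>L. w x * x ^ i))"
    using mom assms by (intro sum.cong) auto
  also have "\<dots> = (\<Sum>x\<in>L. w x * poly p x)"
    by (simp add: poly_altdef sum_distrib_left mult_ac sum.swap[of _ L])
  finally show ?thesis .
qed

definition lag :: "nat \<Rightarrow> real poly" where
  "lag l = smult (1 / (\<Prod>m\<in>{1..k}-{l}. (th l - th m))) (\<Prod>m\<in>{1..k}-{l}. [:- th m, 1:])"

lemma lag_prod_nz: "l \<in> {1..k} \<Longrightarrow> (\<Prod>m\<in>{1..k}-{l}. (th l - th m)) \<noteq> 0"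
  using th_inj by (auto simp: prod_zero_iff)

lemma poly_lag: "l \<in> {1..k} \<Longrightarrow> m \<in> {1..k} \<Longrightarrow> poly (lag l) (th m) = (if m = l then 1 else 0)"
  using lag_prod_nz[of l] by (auto simp: lag_def poly_prod prod_zero_iff)

lemma degree_lag: "l \<in> {1..k} \<Longrightarrow> degree (lag l) = k - 1"
proof -
  assume l: "l \<in> {1..k}"
  have "degree (\<Prod>m\<in>{1..k}-{l}. [:- th m, 1:]) = (\<Sum>m\<in>{1..k}-{l}. degree [:- th m, (1::real):])"
    by (rule degree_prod_eq_sum_degree) auto
  also have "\<dots> = k - 1" using l by simp
  finally show ?thesis using lag_prod_nz[OF l] by (simp add: lag_def)
qed

lemma lag_nz: "l \<in> {1..k} \<Longrightarrow> lag l \<noteq> 0"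
  using poly_lag[of l l] by auto

lemma pderiv_sum: "pderiv (sum f A) = (\<Sum>x\<in>A. pderiv (f x))"
  using higher_pderiv_sum[of 1 f A] by simp

definition dl :: "nat \<Rightarrow> real" where "dl l = poly (pderiv (lag l)) (th l)"

definition herm :: "nat \<Rightarrow> real poly" where
  "herm l = [:1 + 2 * dl l * th l, - 2 * dl l:] * (lag l)^2"

definition gpol :: "nat \<Rightarrow> real poly" where
  "gpol i = [:- th i, 1:] * (lag i)^2"

lemma pderiv_sq: "pderiv (p^2) = smult 2 (p * pderiv p)" for p :: "real poly"
  using pderiv_power_Suc[of p 1] by (simp add: numeral_2_eq_2)

lemma poly_herm: "l \<in> {1..k} \<Longrightarrow> m \<in> {1..k} \<Longrightarrow> poly (herm l) (th m) = (if m = l then 1 else 0)"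
  by (auto simp: herm_def poly_lag)

lemma pderiv_lin: "pderiv [:a, b:] = [:b:]"
  by (simp add: pderiv_pCons)

lemma poly_pderiv_herm: "l \<in> {1..k} \<Longrightarrow> m \<in> {1..k} \<Longrightarrow> poly (pderiv (herm l)) (th m) = 0"
proof -
  assume l: "l \<in> {1..k}" and m: "m \<in> {1..k}"
  have e: "poly (lag l) (th m) = (if m = l then 1 else 0)" using poly_lag[OF l m] .
  show ?thesis
  unfolding herm_def pderiv_mult pderiv_sq pderiv_lin
  by (simp only: poly_mult poly_smult poly_power e poly_pCons poly_0 poly_add) (auto simp: dl_def algebra_simps)
qed

lemma poly_gpol: "i \<in> {1..k} \<Longrightarrow> m \<in> {1..k} \<Longrightarrow> poly (gpol i) (th m) = 0"
  by (auto simp: gpol_def poly_lag)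

lemma poly_pderiv_gpol: "i \<in> {1..k} \<Longrightarrow> m \<in> {1..k} \<Longrightarrow> m \<noteq> i \<Longrightarrow> poly (pderiv (gpol i)) (th m) = 0"
proof -
  assume l: "i \<in> {1..k}" and m: "m \<in> {1..k}" "m \<noteq> i"
  have e: "poly (lag i) (th m) = 0" using poly_lag[OF l m(1)] m by simp
  show ?thesis
  unfolding gpol_def pderiv_mult pderiv_sq pderiv_lin
  by (simp only: poly_mult poly_smult poly_power e poly_pCons poly_0 poly_add) auto
qed

lemma degree_herm: "l \<in> {1..k} \<Longrightarrow> degree (herm l) \<le> 2*k - 1"
proof -
  assume l: "l \<in> {1..k}"
  have "degree (herm l) \<le> degree [:1 + 2 * dl l * th l, - 2 * dl l:] + degree ((lag l)^2)"
    unfolding herm_def by (rule degree_mult_le)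
  also have "\<dots> \<le> 1 + 2 * (k - 1)"
    using degree_lag[OF l] by (intro add_mono) (auto simp: degree_power_eq lag_nz[OF l])
  finally show ?thesis using k1 by simp
qed

lemma degree_gpol: "i \<in> {1..k} \<Longrightarrow> degree (gpol i) = 2*k - 1"
proof -
  assume l: "i \<in> {1..k}"
  have "degree (gpol i) = degree [:- th i, 1:] + degree ((lag i)^2)"
    unfolding gpol_def by (rule degree_mult_eq) (auto simp: lag_nz[OF l])
  then show ?thesis using degree_lag[OF l] k1 by (simp add: degree_power_eq lag_nz[OF l])
qed

definition hp :: "nat \<Rightarrow> real poly" where
  "hp i = (\<Sum>l=1..i. herm l) +
     smult (- coeff (\<Sum>l=1..i. herm l) (2*k-1) / coeff (gpol i) (2*k-1)) (gpol i)"

lemma hp_props: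
  assumes i: "i \<in> {1..k}"
  shows "degree (hp i) \<le> 2*k - 2"
    and "\<And>m. m \<in> {1..k} \<Longrightarrow> poly (hp i) (th m) = (if m \<le> i then 1 else 0)"
    and "\<And>m. m \<in> {1..k} \<Longrightarrow> m \<noteq> i \<Longrightarrow> poly (pderiv (hp i)) (th m) = 0"
proof -
  define H where "H = (\<Sum>l=1..i. herm l)"
  have cg: "coeff (gpol i) (2*k-1) \<noteq> 0"
    using degree_gpol[OF i] by (metis leading_coeff_0_iff degree_0 k1 gpol_def lag_nz[OF i]
        mult_eq_0_iff pCons_eq_0_iff zero_neq_one power_not_zero)
  have dH: "degree H \<le> 2*k-1" unfolding H_def
    using i by (intro degree_sum_le) (auto, metis One_nat_def atLeastAtMost_iff degree_herm le_trans)
  show "degree (hp i) \<le> 2*k - 2"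
  proof (rule degree_le, intro allI impI)
    fix n assume n: "2*k - 2 < n"
    show "coeff (hp i) n = 0"
    proof (cases "n = 2*k-1")
      case True
      then show ?thesis using cg unfolding hp_def H_def[symmetric] by simp
    next
      case False
      then have "n > 2*k-1" using n by linarith
      then have "coeff H n = 0" "coeff (gpol i) n = 0" using dH degree_gpol[OF i]
        by (auto intro!: coeff_eq_0)
      then show ?thesis unfolding hp_def H_def[symmetric] by simp
    qed
  qed
  show "\<And>m. m \<in> {1..k} \<Longrightarrow> poly (hp i) (th m) = (if m \<le> i then 1 else 0)"
  proof -
    fix m assume m: "m \<in> {1..k}"
    have "poly H (th m) = (\<Sum>l=1..i. if m = l then 1 else 0)"
      unfolding H_def poly_sum using i m by (intro sum.cong) (auto simp: poly_herm)
    also have "\<dots> = (if m \<le> i then 1 else 0)" using m by auto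
    finally show "poly (hp i) (th m) = (if m \<le> i then 1 else 0)"
      using i m unfolding hp_def H_def[symmetric] by (simp add: poly_gpol)
  qed
  show "\<And>m. m \<in> {1..k} \<Longrightarrow> m \<noteq> i \<Longrightarrow> poly (pderiv (hp i)) (th m) = 0"
  proof -
    fix m assume m: "m \<in> {1..k}" "m \<noteq> i"
    have "poly (pderiv H) (th m) = 0"
      unfolding H_def pderiv_sum poly_sum using i m by (intro sum.neutral) (auto simp: poly_pderiv_herm)
    then show "poly (pderiv (hp i)) (th m) = 0"
      using i m unfolding hp_def H_def[symmetric] by (simp add: pderiv_add pderiv_diff pderiv_smult poly_pderiv_gpol)
  qed
qed

end


lemma roots_prod_dvd:
  fixes f :: "real poly"
  assumes "finite Z" "\<forall>z\<in>Z. poly f z = 0"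
  shows "(\<Prod>z\<in>Z. [:- z, 1:]) dvd f"
  using assms
proof (induction Z arbitrary: f rule: finite_induct)
  case empty then show ?case by simp
next
  case (insert z Z)
  then have "[:- z, 1:] dvd f" by (simp add: poly_eq_0_iff_dvd)
  then obtain g where g: "f = [:- z, 1:] * g" by (elim dvdE)
  have "\<forall>y\<in>Z. poly g y = 0"
  proof
    fix y assume y: "y \<in> Z"
    then have "y \<noteq> z" using insert by auto
    moreover have "poly f y = 0" using insert y by auto
    ultimately show "poly g y = 0" using g by simp
  qed
  then have "(\<Prod>z\<in>Z. [:- z, 1:]) dvd g" using insert by blast
  then show ?case unfolding g prod.insert[OF insert(1,2)] by (rule mult_dvd_mono[OF dvd_refl])
qed

lemma roots_prod:
  fixes f :: "real poly"
  assumes "finite Z" "\<forall>z\<in>Z. poly f z = 0" "degree f \<le> card Z"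
  shows "\<exists>c. \<forall>t. poly f t = c * (\<Prod>z\<in>Z. t - z)"
proof (cases "f = 0")
  case True then show ?thesis by (intro exI[of _ 0]) simp
next
  case False
  obtain q where q: "f = (\<Prod>z\<in>Z. [:- z, 1:]) * q" using roots_prod_dvd[OF assms(1,2)] by (elim dvdE)
  have P0: "(\<Prod>z\<in>Z. [:- z, 1:]) \<noteq> (0::real poly)" by (simp add: prod_zero_iff assms(1))
  have dP: "degree (\<Prod>z\<in>Z. [:- z, 1:] :: real poly) = card Z"
    by (subst degree_prod_eq_sum_degree) auto
  have "q \<noteq> 0" using q False by auto
  then have "degree f = card Z + degree q" using q P0 dP by (simp add: degree_mult_eq)
  then have "degree q = 0" using assms(3) by simp
  then obtain c where "q = [:c:]" by (metis degree_eq_zeroE)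
  then show ?thesis using q by (intro exI[of _ c]) (simp add: poly_prod)
qed

lemma prod_neg_one:
  fixes f :: "nat \<Rightarrow> real"
  assumes "finite S" "l \<in> S" "f l < 0" "\<forall>m\<in>S-{l}. f m > 0"
  shows "prod f S < 0"
proof -
  have "prod f S = f l * prod f (S - {l})" using assms by (simp add: prod.remove)
  moreover have "prod f (S - {l}) > 0" using assms by (intro prod_pos) auto
  ultimately show ?thesis using assms(3) by (simp add: mult_neg_pos)
qed

context gq
begin

lemma find_interval:
  assumes "1 \<le> a0" "a0 < b0" "b0 \<le> k" "th a0 \<le> t" "t \<le> th b0"
  shows "\<exists>l\<in>{a0..<b0}. th l \<le> t \<and> t \<le> th (Suc l)"
  using assms
proof (induction b0)
  case 0 then show ?case by simp
next
  case (Suc b)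
  show ?case
  proof (cases "t \<le> th b \<and> b \<noteq> a0")
    case True
    hence "a0 < b" using Suc by simp
    then show ?thesis using Suc True by fastforce
  next
    case False
    then have "th b \<le> t" using Suc by auto
    then show ?thesis using Suc by (intro bexI[of _ b]) auto
  qed
qed

lemma no_node_between:
  assumes "m \<in> {1..k}" "l \<in> {1..<k}" "th l < x" "x < th (Suc l)"
  shows "th m \<noteq> x"
proof
  assume e: "th m = x"
  have "\<not> m \<le> l" using th_le[of m l] assms e by auto
  moreover have "\<not> Suc l \<le> m" using th_le[of "Suc l" m] assms e by auto
  ultimately show False by simp
qed

end


lemma pair_pos: "x < y \<Longrightarrow> t < x \<or> y < t \<Longrightarrow> (t - x) * (t - y) > (0::real)"
  by (auto intro: mult_neg_neg mult_pos_pos)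

lemma pair_neg: "x < t \<Longrightarrow> t < y \<Longrightarrow> (t - x) * (t - y) < (0::real)"
  by (auto intro: mult_pos_neg)

context gq
begin

context
  fixes i :: nat
  assumes i1: "1 \<le> i" and ik: "i < k"
begin

definition eta :: "nat \<Rightarrow> real" where
  "eta l = (SOME x. th l < x \<and> x < th (Suc l) \<and> poly (pderiv (hp i)) x = 0)"

definition zeta :: "nat \<Rightarrow> real" where
  "zeta l = (SOME x. th l < x \<and> x < th (Suc l) \<and> poly (pderiv (hp i)) x = 0)"

lemma iin: "i \<in> {1..k}" using i1 ik by auto

lemma rolle_pt:
  assumes l: "l \<in> {1..<k}" and eq: "poly (hp i) (th l) = poly (hp i) (th (Suc l))"
  shows "\<exists>x. th l < x \<and> x < th (Suc l) \<and> poly (pderiv (hp i)) x = 0"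
proof -
  have lt: "th l < th (Suc l)" using incr l by auto
  from poly_MVT[OF lt, of "hp i"] obtain x where
    x: "th l < x" "x < th (Suc l)" "poly (hp i) (th (Suc l)) - poly (hp i) (th l) = (th (Suc l) - th l) * poly (pderiv (hp i)) x"
    by blast
  then show ?thesis using eq lt by (intro exI[of _ x]) auto
qed

lemma eta_props:
  assumes l: "l \<in> {1..<i}"
  shows "th l < eta l" "eta l < th (Suc l)" "poly (pderiv (hp i)) (eta l) = 0"
proof -
  have "poly (hp i) (th l) = poly (hp i) (th (Suc l))"
    using hp_props(2)[OF iin, of l] hp_props(2)[OF iin, of "Suc l"] l ik by auto
  from someI_ex[OF rolle_pt[OF _ this]] l ik
  show "th l < eta l" "eta l < th (Suc l)" "poly (pderiv (hp i)) (eta l) = 0"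
    unfolding eta_def by auto
qed

lemma zeta_props:
  assumes l: "l \<in> {Suc i..<k}"
  shows "th l < zeta l" "zeta l < th (Suc l)" "poly (pderiv (hp i)) (zeta l) = 0"
proof -
  have "poly (hp i) (th l) = poly (hp i) (th (Suc l))"
    using hp_props(2)[OF iin, of l] hp_props(2)[OF iin, of "Suc l"] l ik i1 by auto
  from someI_ex[OF rolle_pt[OF _ this]] l i1
  show "th l < zeta l" "zeta l < th (Suc l)" "poly (pderiv (hp i)) (zeta l) = 0"
    unfolding zeta_def by auto
qed

definition P1 :: "real \<Rightarrow> real" where
  "P1 t = (\<Prod>m\<in>{1..<i}. (t - th m) * (t - eta m))"

definition P2 :: "real \<Rightarrow> real" where
  "P2 t = (\<Prod>m\<in>{Suc i..<k}. (t - zeta m) * (t - th (Suc m)))"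

lemma deriv_factor:
  "\<exists>c. \<forall>t. poly (pderiv (hp i)) t = c * (t - th (Suc i)) * P1 t * P2 t"
proof -
  define A where "A = {1..k} - {i}"
  define B where "B = {1..<i}"
  define C where "C = {Suc i..<k}"
  define Z where "Z = th ` A \<union> eta ` B \<union> zeta ` C"
  have injA: "inj_on th A" unfolding A_def using th_inj by (auto simp: inj_on_def)
  have injB: "inj_on eta B"
  proof (rule inj_onI)
    fix x y assume xy: "x \<in> B" "y \<in> B" "eta x = eta y"
    show "x = y"
    proof (rule ccontr)
      assume "x \<noteq> y"
      then consider "x < y" | "y < x" by linarith
      then show False
      proof cases
        case 1
        then have "th (Suc x) \<le> th y" using xy ik by (intro th_le) (auto simp: B_def)
        then show False using eta_props[of x] eta_props[of y] xy by (auto simp: B_def)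
      next
        case 2
        then have "th (Suc y) \<le> th x" using xy ik by (intro th_le) (auto simp: B_def)
        then show False using eta_props[of x] eta_props[of y] xy by (auto simp: B_def)
      qed
    qed
  qed
  have injC: "inj_on zeta C"
  proof (rule inj_onI)
    fix x y assume xy: "x \<in> C" "y \<in> C" "zeta x = zeta y"
    show "x = y"
    proof (rule ccontr)
      assume "x \<noteq> y"
      then consider "x < y" | "y < x" by linarith
      then show False
      proof cases
        case 1
        then have "th (Suc x) \<le> th y" using xy ik by (intro th_le) (auto simp: C_def)
        then show False using zeta_props[of x] zeta_props[of y] xy by (auto simp: C_def)
      next
        case 2
        then have "th (Suc y) \<le> th x" using xy ik by (intro th_le) (auto simp: C_def)
        then show False using zeta_props[of x] zeta_props[of y] xy by (auto simp: C_def)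
      qed
    qed
  qed
  have dAB: "th ` A \<inter> eta ` B = {}"
  proof -
    { fix m l assume m: "m \<in> A" and l: "l \<in> B" and e: "th m = eta l"
      have "th m \<noteq> eta l"
        using no_node_between[of m l "eta l"] eta_props[of l] m l ik by (auto simp: A_def B_def)
      with e have False by simp }
    then show ?thesis by blast
  qed
  have dAC: "th ` A \<inter> zeta ` C = {}"
  proof -
    { fix m l assume m: "m \<in> A" and l: "l \<in> C" and e: "th m = zeta l"
      have "th m \<noteq> zeta l"
        using no_node_between[of m l "zeta l"] zeta_props[of l] m l ik by (auto simp: A_def C_def)
      with e have False by simp }
    then show ?thesis by blast
  qed
  have dBC: "eta ` B \<inter> zeta ` C = {}"
  proof -
    { fix m l assume m: "m \<in> B" and l: "l \<in> C" and e: "eta m = zeta l"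
      have "th (Suc m) \<le> th l" using m l ik by (intro th_le) (auto simp: B_def C_def)
      then have "eta m < zeta l" using eta_props[of m] zeta_props[of l] m l by (auto simp: B_def C_def)
      with e have False by simp }
    then show ?thesis by blast
  qed
  have cardZ: "card Z = 2*k - 3"
  proof -
    have "card Z = card (th ` A \<union> eta ` B) + card (zeta ` C)"
      unfolding Z_def using dAC dBC by (intro card_Un_disjoint) (auto simp: A_def B_def C_def)
    also have "card (th ` A \<union> eta ` B) = card (th ` A) + card (eta ` B)"
      using dAB by (intro card_Un_disjoint) (auto simp: A_def B_def)
    also have "card (th ` A) = k - 1" using injA iin by (simp add: card_image A_def)
    also have "card (eta ` B) = i - 1" using injB by (simp add: card_image B_def)
    also have "card (zeta ` C) = k - 1 - i" using injC by (simp add: card_image C_def)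
    finally show ?thesis using i1 ik by simp
  qed
  have finZ: "finite Z" by (simp add: Z_def A_def B_def C_def)
  have rootsZ: "\<forall>z\<in>Z. poly (pderiv (hp i)) z = 0"
    using hp_props(3)[OF iin] eta_props zeta_props by (fastforce simp: Z_def A_def B_def C_def)
  have degZ: "degree (pderiv (hp i)) \<le> card Z"
    using hp_props(1)[OF iin] cardZ by (simp add: degree_pderiv)
  obtain c where c: "\<And>t. poly (pderiv (hp i)) t = c * (\<Prod>z\<in>Z. t - z)"
    using roots_prod[OF finZ rootsZ degZ] by blast
  have "(\<Prod>z\<in>Z. t - z) = (t - th (Suc i)) * P1 t * P2 t" for t
  proof -
    have "(\<Prod>z\<in>Z. t - z) = (\<Prod>z\<in>th ` A \<union> eta ` B. t - z) * (\<Prod>z\<in>zeta ` C. t - z)"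
      unfolding Z_def using dAC dBC by (intro prod.union_disjoint) (auto simp: A_def B_def C_def)
    also have "(\<Prod>z\<in>th ` A \<union> eta ` B. t - z) = (\<Prod>z\<in>th ` A. t - z) * (\<Prod>z\<in>eta ` B. t - z)"
      using dAB by (intro prod.union_disjoint) (auto simp: A_def B_def)
    also have "(\<Prod>z\<in>th ` A. t - z) = (\<Prod>m\<in>A. t - th m)" using injA by (simp add: prod.reindex)
    also have "(\<Prod>z\<in>eta ` B. t - z) = (\<Prod>m\<in>B. t - eta m)" using injB by (simp add: prod.reindex)
    also have "(\<Prod>z\<in>zeta ` C. t - z) = (\<Prod>m\<in>C. t - zeta m)" using injC by (simp add: prod.reindex)
    also have "(\<Prod>m\<in>A. t - th m) = (\<Prod>m\<in>B. t - th m) * (t - th (Suc i)) * (\<Prod>m\<in>C. t - th (Suc m))"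
    proof -
      have A: "A = B \<union> insert (Suc i) (Suc ` C)" using ik by (auto simp: A_def B_def C_def image_iff)
      have "(\<Prod>m\<in>A. t - th m) = (\<Prod>m\<in>B. t - th m) * (\<Prod>m\<in>insert (Suc i) (Suc ` C). t - th m)"
        unfolding A by (intro prod.union_disjoint) (auto simp: B_def C_def)
      also have "(\<Prod>m\<in>insert (Suc i) (Suc ` C). t - th m) = (t - th (Suc i)) * (\<Prod>m\<in>Suc ` C. t - th m)"
        by (intro prod.insert) (auto simp: C_def)
      also have "(\<Prod>m\<in>Suc ` C. t - th m) = (\<Prod>m\<in>C. t - th (Suc m))" by (simp add: prod.reindex)
      finally show ?thesis by simp
    qed
    finally show ?thesis unfolding P1_def P2_def prod.distrib B_def C_def by (simp add: mult_ac)
  qed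
  then show ?thesis using c by (intro exI[of _ c]) (simp add: mult_ac)
qed

lemma pair1_other:
  assumes "l \<in> {1..<i}" "m \<in> {1..<i}" "m \<noteq> l" "th l < \<xi>" "\<xi> < th (Suc l)"
  shows "(\<xi> - th m) * (\<xi> - eta m) > 0"
proof (rule pair_pos)
  show "th m < eta m" using eta_props[of m] assms by auto
  show "\<xi> < th m \<or> eta m < \<xi>"
  proof (cases "m < l")
    case True
    then have "th (Suc m) \<le> th l" using assms ik by (intro th_le) auto
    then show ?thesis using eta_props[of m] assms by auto
  next
    case False
    then have "th (Suc l) \<le> th m" using assms ik by (intro th_le) auto
    then show ?thesis using assms by auto
  qed
qed

lemma pair2_other:
  assumes "l \<in> {Suc i..<k}" "m \<in> {Suc i..<k}" "m \<noteq> l" "th l < \<xi>" "\<xi> < th (Suc l)"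
  shows "(\<xi> - zeta m) * (\<xi> - th (Suc m)) > 0"
proof (rule pair_pos)
  show "zeta m < th (Suc m)" using zeta_props[of m] assms by auto
  show "\<xi> < zeta m \<or> th (Suc m) < \<xi>"
  proof (cases "m < l")
    case True
    then have "th (Suc m) \<le> th l" using assms ik by (intro th_le) auto
    then show ?thesis using assms by auto
  next
    case False
    then have "th (Suc l) \<le> th m" using assms ik by (intro th_le) auto
    then show ?thesis using zeta_props[of m] assms by auto
  qed
qed

lemma P1_pos_gen: "(\<And>m. m \<in> {1..<i} \<Longrightarrow> (\<xi> - th m) * (\<xi> - eta m) > 0) \<Longrightarrow> P1 \<xi> > 0"
  unfolding P1_def by (rule prod_pos) auto

lemma P2_pos_gen: "(\<And>m. m \<in> {Suc i..<k} \<Longrightarrow> (\<xi> - zeta m) * (\<xi> - th (Suc m)) > 0) \<Longrightarrow> P2 \<xi> > 0"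
  unfolding P2_def by (rule prod_pos) auto

lemma P1_pos_right: "th i \<le> \<xi> \<Longrightarrow> P1 \<xi> > 0"
proof (rule P1_pos_gen)
  fix m assume m: "m \<in> {1..<i}" and x: "th i \<le> \<xi>"
  have "th (Suc m) \<le> th i" using m ik by (intro th_le) auto
  then show "(\<xi> - th m) * (\<xi> - eta m) > 0" using eta_props[OF m] x by (intro pair_pos) auto
qed

lemma P1_pos_left: "\<xi> < th 1 \<Longrightarrow> P1 \<xi> > 0"
proof (rule P1_pos_gen)
  fix m assume m: "m \<in> {1..<i}" and x: "\<xi> < th 1"
  have "th 1 \<le> th m" using m ik by (intro th_le) auto
  then show "(\<xi> - th m) * (\<xi> - eta m) > 0" using eta_props[OF m] x by (intro pair_pos) auto
qed

lemma P2_pos_left: "\<xi> < th (Suc i) \<Longrightarrow> P2 \<xi> > 0"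
proof (rule P2_pos_gen)
  fix m assume m: "m \<in> {Suc i..<k}" and x: "\<xi> < th (Suc i)"
  have "th (Suc i) \<le> th m" using m ik by (intro th_le) auto
  then show "(\<xi> - zeta m) * (\<xi> - th (Suc m)) > 0" using zeta_props[OF m] x by (intro pair_pos) auto
qed

lemma P2_pos_right: "th k < \<xi> \<Longrightarrow> P2 \<xi> > 0"
proof (rule P2_pos_gen)
  fix m assume m: "m \<in> {Suc i..<k}" and x: "th k < \<xi>"
  have "th (Suc m) \<le> th k" using m ik by (intro th_le) auto
  then show "(\<xi> - zeta m) * (\<xi> - th (Suc m)) > 0" using zeta_props[OF m] x by (intro pair_pos) auto
qed

lemma P1_at:
  assumes l: "l \<in> {1..<i}"
  shows "th l < \<xi> \<Longrightarrow> \<xi> < eta l \<Longrightarrow> P1 \<xi> < 0"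
    and "eta l < \<xi> \<Longrightarrow> \<xi> < th (Suc l) \<Longrightarrow> P1 \<xi> > 0"
proof -
  assume a: "th l < \<xi>" "\<xi> < eta l"
  show "P1 \<xi> < 0" unfolding P1_def
  proof (rule prod_neg_one[OF _ l])
    show "(\<xi> - th l) * (\<xi> - eta l) < 0" using a by (intro pair_neg)
    show "\<forall>m\<in>{1..<i} - {l}. 0 < (\<xi> - th m) * (\<xi> - eta m)"
      using pair1_other[OF l] a eta_props[OF l] by auto
  qed simp
next
  assume a: "eta l < \<xi>" "\<xi> < th (Suc l)"
  show "P1 \<xi> > 0"
  proof (rule P1_pos_gen)
    fix m assume m: "m \<in> {1..<i}"
    show "(\<xi> - th m) * (\<xi> - eta m) > 0"
    proof (cases "m = l")
      case True then show ?thesis using a eta_props[OF l] by (intro pair_pos) auto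
    next
      case False then show ?thesis using pair1_other[OF l m] a eta_props[OF l] by auto
    qed
  qed
qed

lemma P2_at:
  assumes l: "l \<in> {Suc i..<k}"
  shows "zeta l < \<xi> \<Longrightarrow> \<xi> < th (Suc l) \<Longrightarrow> P2 \<xi> < 0"
    and "th l < \<xi> \<Longrightarrow> \<xi> < zeta l \<Longrightarrow> P2 \<xi> > 0"
proof -
  assume a: "zeta l < \<xi>" "\<xi> < th (Suc l)"
  show "P2 \<xi> < 0" unfolding P2_def
  proof (rule prod_neg_one[OF _ l])
    show "(\<xi> - zeta l) * (\<xi> - th (Suc l)) < 0" using a by (intro pair_neg)
    show "\<forall>m\<in>{Suc i..<k} - {l}. 0 < (\<xi> - zeta m) * (\<xi> - th (Suc m))"
      using pair2_other[OF l] a zeta_props[OF l] by auto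
  qed simp
next
  assume a: "th l < \<xi>" "\<xi> < zeta l"
  show "P2 \<xi> > 0"
  proof (rule P2_pos_gen)
    fix m assume m: "m \<in> {Suc i..<k}"
    show "(\<xi> - zeta m) * (\<xi> - th (Suc m)) > 0"
    proof (cases "m = l")
      case True then show ?thesis using a zeta_props[OF l] by (intro pair_pos) auto
    next
      case False then show ?thesis using pair2_other[OF l m] a zeta_props[OF l] by auto
    qed
  qed
qed

lemma mvt_inc: "a < b \<Longrightarrow> (\<And>\<xi>. a < \<xi> \<Longrightarrow> \<xi> < b \<Longrightarrow> poly (pderiv p) \<xi> > 0) \<Longrightarrow> poly p a < poly p b"
  for p :: "real poly"
proof -
  assume ab: "a < b" and d: "\<And>\<xi>. a < \<xi> \<Longrightarrow> \<xi> < b \<Longrightarrow> poly (pderiv p) \<xi> > 0"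
  obtain x where x: "a < x" "x < b" "poly p b - poly p a = (b - a) * poly (pderiv p) x"
    using poly_MVT[OF ab, of p] by blast
  have "(b - a) * poly (pderiv p) x > 0" using ab d[OF x(1,2)] by simp
  then show ?thesis using x(3) by simp
qed

lemma mvt_dec: "a < b \<Longrightarrow> (\<And>\<xi>. a < \<xi> \<Longrightarrow> \<xi> < b \<Longrightarrow> poly (pderiv p) \<xi> < 0) \<Longrightarrow> poly p b < poly p a"
  for p :: "real poly"
proof -
  assume ab: "a < b" and d: "\<And>\<xi>. a < \<xi> \<Longrightarrow> \<xi> < b \<Longrightarrow> poly (pderiv p) \<xi> < 0"
  obtain x where x: "a < x" "x < b" "poly p b - poly p a = (b - a) * poly (pderiv p) x"
    using poly_MVT[OF ab, of p] by blast
  have "(b - a) * poly (pderiv p) x < 0" using ab d[OF x(1,2)] by (simp add: mult_pos_neg)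
  then show ?thesis using x(3) by simp
qed

lemma hp_sign: "(t \<le> th i \<longrightarrow> 1 \<le> poly (hp i) t) \<and> 0 \<le> poly (hp i) t"
proof -
  obtain c where c: "\<And>t. poly (pderiv (hp i)) t = c * (t - th (Suc i)) * P1 t * P2 t"
    using deriv_factor by blast
  have v: "\<And>m. m \<in> {1..k} \<Longrightarrow> poly (hp i) (th m) = (if m \<le> i then 1 else 0)"
    using hp_props(2)[OF iin] by blast
  have ti: "th i < th (Suc i)" using incr i1 ik by auto
  have cpos: "c > 0"
  proof (rule ccontr)
    assume "\<not> c > 0"
    have "poly (hp i) (th (Suc i)) < poly (hp i) (th i)" using v[of i] v[of "Suc i"] i1 ik by auto
    obtain \<xi> where x: "th i < \<xi>" "\<xi> < th (Suc i)"
      "poly (hp i) (th (Suc i)) - poly (hp i) (th i) = (th (Suc i) - th i) * poly (pderiv (hp i)) \<xi>"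
      using poly_MVT[OF ti, of "hp i"] by blast
    have "(th (Suc i) - th i) * poly (pderiv (hp i)) \<xi> < 0" using x(3) \<open>poly (hp i) (th (Suc i)) < _\<close> by simp
    then have "poly (pderiv (hp i)) \<xi> < 0" using ti by (simp add: mult_less_0_iff)
    have "P1 \<xi> > 0" "P2 \<xi> > 0" using x P1_pos_right P2_pos_left by auto
    then have "c * (\<xi> - th (Suc i)) * P1 \<xi> * P2 \<xi> \<ge> 0"
      using \<open>\<not> c > 0\<close> x by (intro mult_nonneg_nonneg mult_nonpos_nonpos) auto
    then show False using \<open>poly (pderiv (hp i)) \<xi> < 0\<close> c by simp
  qed
  have neg: "poly (pderiv (hp i)) \<xi> < 0" if "\<xi> < th (Suc i)" "P1 \<xi> > 0" "P2 \<xi> > 0" for \<xi>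
    using that cpos c[of \<xi>] by (simp add: mult_pos_neg mult_neg_pos)
  have pos1: "poly (pderiv (hp i)) \<xi> > 0" if "\<xi> < th (Suc i)" "P1 \<xi> < 0" "P2 \<xi> > 0" for \<xi>
  proof -
    have "c * (\<xi> - th (Suc i)) < 0" using that cpos by (simp add: mult_pos_neg)
    then have "c * (\<xi> - th (Suc i)) * P1 \<xi> > 0" using that by (simp add: mult_neg_neg)
    then show ?thesis using c[of \<xi>] that by simp
  qed
  have pos2: "poly (pderiv (hp i)) \<xi> > 0" if "\<xi> > th (Suc i)" "P1 \<xi> > 0" "P2 \<xi> > 0" for \<xi>
    using that cpos c[of \<xi>] by simp
  have neg2: "poly (pderiv (hp i)) \<xi> < 0" if "\<xi> > th (Suc i)" "P1 \<xi> > 0" "P2 \<xi> < 0" for \<xi>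
    using that cpos c[of \<xi>] by (simp add: mult_pos_neg)
  have left: "1 \<le> poly (hp i) t" if t: "t \<le> th i"
  proof (cases "t < th 1")
    case True
    have "poly (hp i) (th 1) < poly (hp i) t"
    proof (rule mvt_dec[OF True])
      fix \<xi> assume x: "t < \<xi>" "\<xi> < th 1"
      have "th 1 \<le> th (Suc i)" using ik by (intro th_le) auto
      then show "poly (pderiv (hp i)) \<xi> < 0" using x by (intro neg P1_pos_left P2_pos_left) auto
    qed
    then show ?thesis using v[of 1] i1 ik by auto
  next
    case False
    show ?thesis
    proof (cases "t = th 1")
      case True then show ?thesis using v[of 1] i1 ik by auto
    next
      case False
      then have t1: "th 1 < t" using \<open>\<not> t < th 1\<close> by auto
      then have "1 < i" using t i1 by (metis le_antisym linorder_not_le nat_less_le One_nat_def)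
      then obtain l where l: "l \<in> {1..<i}" "th l \<le> t" "t \<le> th (Suc l)"
        using find_interval[of 1 i t] t t1 ik by auto
      have lk: "l \<in> {1..k}" "Suc l \<in> {1..k}" "Suc l \<le> i" using l ik by auto
      have sl: "th (Suc l) \<le> th (Suc i)" using lk ik by (intro th_le) auto
      show ?thesis
      proof (cases "t \<le> eta l")
        case True
        show ?thesis
        proof (cases "t = th l")
          case True then show ?thesis using v[OF lk(1)] l by auto
        next
          case False
          then have lt: "th l < t" using l by auto
          have "poly (hp i) (th l) < poly (hp i) t"
          proof (rule mvt_inc[OF lt])
            fix \<xi> assume x: "th l < \<xi>" "\<xi> < t"
            show "poly (pderiv (hp i)) \<xi> > 0"
              using x \<open>t \<le> eta l\<close> eta_props[OF l(1)] sl
              by (intro pos1 P1_at(1)[OF l(1)] P2_pos_left) auto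
          qed
          then show ?thesis using v[OF lk(1)] l by auto
        qed
      next
        case False
        show ?thesis
        proof (cases "t = th (Suc l)")
          case True then show ?thesis using v[OF lk(2)] lk by auto
        next
          case ne: False
          then have lt: "t < th (Suc l)" using l by auto
          have "poly (hp i) (th (Suc l)) < poly (hp i) t"
          proof (rule mvt_dec[OF lt])
            fix \<xi> assume x: "t < \<xi>" "\<xi> < th (Suc l)"
            show "poly (pderiv (hp i)) \<xi> < 0"
              using x False sl
              by (intro neg P1_at(2)[OF l(1)] P2_pos_left) auto
          qed
          then show ?thesis using v[OF lk(2)] lk by auto
        qed
      qed
    qed
  qed
  have right: "0 \<le> poly (hp i) t" if t: "th i \<le> t"
  proof (cases "t \<le> th (Suc i)")
    case True
    show ?thesis
    proof (cases "t = th (Suc i)")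
      case True then show ?thesis using v[of "Suc i"] ik by auto
    next
      case False
      then have lt: "t < th (Suc i)" using \<open>t \<le> th (Suc i)\<close> by auto
      have "poly (hp i) (th (Suc i)) < poly (hp i) t"
      proof (rule mvt_dec[OF lt])
        fix \<xi> assume x: "t < \<xi>" "\<xi> < th (Suc i)"
        show "poly (pderiv (hp i)) \<xi> < 0" using x t by (intro neg P1_pos_right P2_pos_left) auto
      qed
      then show ?thesis using v[of "Suc i"] ik by auto
    qed
  next
    case False
    then have t2: "th (Suc i) < t" by auto
    have P1p: "P1 \<xi> > 0" if "th (Suc i) < \<xi>" for \<xi> using that ti by (intro P1_pos_right) auto
    show ?thesis
    proof (cases "th k \<le> t")
      case True
      show ?thesis
      proof (cases "t = th k")
        case True then show ?thesis using v[of k] ik by auto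
      next
        case False
        then have lt: "th k < t" using \<open>th k \<le> t\<close> by auto
        have "th (Suc i) \<le> th k" using ik by (intro th_le) auto
        then have "poly (hp i) (th k) < poly (hp i) t"
          by (intro mvt_inc[OF lt] pos2 P1p P2_pos_right) auto
        then show ?thesis using v[of k] ik by auto
      qed
    next
      case False
      then have "Suc i < k" using t2 by (metis le_less linorder_not_le Suc_leI ik)
      then obtain l where l: "l \<in> {Suc i..<k}" "th l \<le> t" "t \<le> th (Suc l)"
        using find_interval[of "Suc i" k t] t2 False by auto
      have lk: "l \<in> {1..k}" "Suc l \<in> {1..k}" "\<not> l \<le> i" using l ik by auto
      have sl: "th (Suc i) \<le> th l" using l ik by (intro th_le) auto
      show ?thesis
      proof (cases "t \<le> zeta l")
        case True
        show ?thesis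
        proof (cases "t = th l")
          case True then show ?thesis using v[OF lk(1)] lk by auto
        next
          case False
          then have lt: "th l < t" using l by auto
          have "poly (hp i) (th l) < poly (hp i) t"
          proof (rule mvt_inc[OF lt])
            fix \<xi> assume x: "th l < \<xi>" "\<xi> < t"
            show "poly (pderiv (hp i)) \<xi> > 0"
              using x \<open>t \<le> zeta l\<close> sl by (intro pos2 P1p P2_at(2)[OF l(1)]) auto
          qed
          then show ?thesis using v[OF lk(1)] lk by auto
        qed
      next
        case False
        show ?thesis
        proof (cases "t = th (Suc l)")
          case True then show ?thesis using v[OF lk(2)] lk by auto
        next
          case ne: False
          then have lt: "t < th (Suc l)" using l by auto
          have "poly (hp i) (th (Suc l)) < poly (hp i) t"
          proof (rule mvt_dec[OF lt])
            fix \<xi> assume x: "t < \<xi>" "\<xi> < th (Suc l)"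
            show "poly (pderiv (hp i)) \<xi> < 0"
              using x False sl l by (intro neg2 P1p P2_at(1)[OF l(1)]) auto
          qed
          then show ?thesis using v[OF lk(2)] lk by auto
        qed
      qed
    qed
  qed
  show ?thesis using left right by (cases "t \<le> th i") (auto intro: order_trans[OF zero_le_one])
qed

end
end


context gq
begin

definition F :: "real \<Rightarrow> real" where "F x = (\<Sum>y\<in>{y\<in>L. y \<le> x}. w y)"

lemma total: "(\<Sum>y\<in>L. w y) = (\<Sum>j=1..k. d j)"
proof -
  have "0 < 2 * k" using k1 by simp
  then show ?thesis using mom[rule_format, of 0] by simp
qed

lemma upper:
  assumes i: "i \<in> {1..k}"
  shows "(\<Sum>y\<in>{y\<in>L. y \<le> th i}. w y) \<le> (\<Sum>j=1..i. d j)"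
proof (cases "i = k")
  case True
  have "(\<Sum>y\<in>{y\<in>L. y \<le> th i}. w y) \<le> (\<Sum>y\<in>L. w y)"
    using finL wnn by (intro sum_mono2) auto
  then show ?thesis using total True by simp
next
  case False
  then have i1: "1 \<le> i" and ik: "i < k" using i by auto
  note hs = hp_sign[OF i1 ik]
  have "(\<Sum>y\<in>{y\<in>L. y \<le> th i}. w y) \<le> (\<Sum>y\<in>{y\<in>L. y \<le> th i}. w y * poly (hp i) y)"
  proof (intro sum_mono)
    fix y assume y: "y \<in> {y\<in>L. y \<le> th i}"
    then have "w y * 1 \<le> w y * poly (hp i) y" using hs[of y] wnn by (intro mult_left_mono) auto
    then show "w y \<le> w y * poly (hp i) y" by simp
  qed
  also have "\<dots> \<le> (\<Sum>y\<in>L. w y * poly (hp i) y)"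
    using finL wnn hs by (intro sum_mono2) auto
  also have "\<dots> = (\<Sum>j=1..k. d j * poly (hp i) (th j))"
    using hp_props(1)[OF i] k1 by (intro quad_poly[symmetric]) linarith
  also have "\<dots> = (\<Sum>j=1..k. if j \<le> i then d j else 0)"
    using hp_props(2)[OF i] by (intro sum.cong) auto
  also have "\<dots> = (\<Sum>j=1..i. d j)"
  proof -
    have "{1..k} \<inter> {j. j \<le> i} = {1..i}" using i by auto
    then show ?thesis by (simp add: sum.If_cases)
  qed
  finally show ?thesis .
qed

lemma mirror: "gq k (\<lambda>j. - th (k + 1 - j)) (\<lambda>j. d (k + 1 - j)) (uminus ` L) (\<lambda>x. w (- x))"
proof
  show "1 \<le> k" by (rule k1)
  show "\<forall>j\<in>{1..<k}. - th (k + 1 - j) < - th (k + 1 - Suc j)"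
  proof
    fix j assume "j \<in> {1..<k}"
    then have "th (k + 1 - Suc j) < th (Suc (k + 1 - Suc j))" "Suc (k + 1 - Suc j) = k + 1 - j"
      using incr by auto
    then show "- th (k + 1 - j) < - th (k + 1 - Suc j)" by simp
  qed
  show "\<forall>j\<in>{1..k}. 0 < d (k + 1 - j)"
  proof
    fix j assume "j \<in> {1..k}"
    then have "k + 1 - j \<in> {1..k}" by auto
    then show "0 < d (k + 1 - j)" using dpos by blast
  qed
  show "finite (uminus ` L)" using finL by simp
  show "\<forall>x\<in>uminus ` L. 0 \<le> w (- x)" using wnn by auto
  show "\<forall>m<2 * k. (\<Sum>j = 1..k. d (k + 1 - j) * (- th (k + 1 - j)) ^ m) = (\<Sum>x\<in>uminus ` L. w (- x) * x ^ m)"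
  proof (intro allI impI)
    fix m assume m: "m < 2 * k"
    have "(\<Sum>j = 1..k. d (k + 1 - j) * (- th (k + 1 - j)) ^ m) = (\<Sum>j = 1..k. d j * (- th j) ^ m)"
      by (rule sum.reindex_bij_witness[where i="\<lambda>j. k + 1 - j" and j="\<lambda>j. k + 1 - j"]) auto
    also have "\<dots> = (-1)^m * (\<Sum>j = 1..k. d j * th j ^ m)"
      unfolding sum_distrib_left by (intro sum.cong refl) (subst power_minus, simp add: mult_ac)
    also have "\<dots> = (-1)^m * (\<Sum>x\<in>L. w x * x ^ m)" using mom m by simp
    also have "\<dots> = (\<Sum>x\<in>L. w x * (- x) ^ m)"
      unfolding sum_distrib_left by (intro sum.cong refl) (subst (2) power_minus, simp add: mult_ac)
    also have "\<dots> = (\<Sum>x\<in>uminus ` L. w (- x) * x ^ m)"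
      by (subst sum.reindex) (auto simp: inj_on_def)
    finally show "(\<Sum>j = 1..k. d (k + 1 - j) * (- th (k + 1 - j)) ^ m) = (\<Sum>x\<in>uminus ` L. w (- x) * x ^ m)" .
  qed
qed

lemma lower:
  assumes i: "i \<in> {1..k}"
  shows "(\<Sum>y\<in>{y\<in>L. th i \<le> y}. w y) \<le> (\<Sum>j=i..k. d j)"
proof -
  interpret M: gq k "\<lambda>j. - th (k + 1 - j)" "\<lambda>j. d (k + 1 - j)" "uminus ` L" "\<lambda>x. w (- x)"
    by (rule mirror)
  have i': "k + 1 - i \<in> {1..k}" using i by auto
  have e: "k + 1 - (k + 1 - i) = i" using i by auto
  have "(\<Sum>y\<in>{y\<in>uminus ` L. y \<le> - th i}. w (- y)) \<le> (\<Sum>j=1..k + 1 - i. d (k + 1 - j))"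
    using M.upper[OF i'] unfolding e .
  moreover have "(\<Sum>y\<in>{y\<in>uminus ` L. y \<le> - th i}. w (- y)) = (\<Sum>y\<in>{y\<in>L. th i \<le> y}. w y)"
  proof -
    have "{y\<in>uminus ` L. y \<le> - th i} = uminus ` {y\<in>L. th i \<le> y}" by auto
    then show ?thesis by (simp add: sum.reindex inj_on_def)
  qed
  moreover have "(\<Sum>j=1..k + 1 - i. d (k + 1 - j)) = (\<Sum>j=i..k. d j)"
    by (rule sum.reindex_bij_witness[where i="\<lambda>j. k + 1 - j" and j="\<lambda>j. k + 1 - j"]) (use i in auto)
  ultimately show ?thesis by simp
qed

definition G :: "real \<Rightarrow> real" where "G x = (\<Sum>j=1..k. d j * (if th j \<le> x then 1 else 0))"

lemma F_nonneg: "0 \<le> F x"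
  unfolding F_def using wnn by (intro sum_nonneg) auto

lemma F_mono: "x \<le> y \<Longrightarrow> F x \<le> F y"
  unfolding F_def using wnn finL by (intro sum_mono2) auto

lemma F_le_total: "F x \<le> (\<Sum>l=1..k. d l)"
  unfolding F_def total[symmetric] using wnn finL by (intro sum_mono2) auto

lemma F_lower:
  assumes j: "j \<in> {1..k}" and x: "th j \<le> x"
  shows "(\<Sum>l=1..k. d l) - (\<Sum>l=j..k. d l) \<le> F x"
proof -
  have "(\<Sum>y\<in>L. w y) = (\<Sum>y\<in>{y\<in>L. y < th j}. w y) + (\<Sum>y\<in>{y\<in>L. th j \<le> y}. w y)"
  proof -
    have "L = {y\<in>L. y < th j} \<union> {y\<in>L. th j \<le> y}" by auto
    then show ?thesis using finL by (subst sum.union_disjoint[symmetric]) auto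
  qed
  moreover have "(\<Sum>y\<in>{y\<in>L. y < th j}. w y) \<le> F x"
    unfolding F_def using wnn finL x by (intro sum_mono2) auto
  ultimately show ?thesis using lower[OF j] total by linarith
qed

lemma G_eq:
  assumes "j \<le> k" "j = 0 \<or> th j \<le> x" "j = k \<or> x < th (Suc j)"
  shows "G x = (\<Sum>l=1..j. d l)"
proof -
  have "G x = (\<Sum>l=1..k. if l \<le> j then d l else 0)"
    unfolding G_def
  proof (intro sum.cong refl)
    fix l assume l: "l \<in> {1..k}"
    show "d l * (if th l \<le> x then 1 else 0) = (if l \<le> j then d l else 0)"
    proof (cases "l \<le> j")
      case True
      then have "j \<noteq> 0" using l by auto
      then have "th l \<le> th j" "th j \<le> x" using True l assms by (auto intro: th_le)
      then show ?thesis using True by auto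
    next
      case False
      then have "j \<noteq> k" using l by auto
      then have "th (Suc j) \<le> th l" "x < th (Suc j)" using False l assms by (auto intro: th_le)
      then show ?thesis using False by auto
    qed
  qed
  also have "\<dots> = (\<Sum>l=1..j. d l)"
  proof -
    have "{1..k} \<inter> {l. l \<le> j} = {1..j}" using assms by auto
    then show ?thesis by (simp add: sum.If_cases)
  qed
  finally show ?thesis .
qed

lemma d_nonneg: "d 0 = 0 \<Longrightarrow> d (Suc k) = 0 \<Longrightarrow> j \<le> Suc k \<Longrightarrow> 0 \<le> d j"
proof -
  assume a: "d 0 = 0" "d (Suc k) = 0" "j \<le> Suc k"
  show ?thesis
  proof (cases "j \<in> {1..k}")
    case True then show ?thesis using dpos by (simp add: less_imp_le)
  next
    case False
    then have "j = 0 \<or> j = Suc k" using a by auto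
    then show ?thesis using a by auto
  qed
qed

lemma bracket:
  assumes d0: "d 0 = 0" and dk: "d (Suc k) = 0"
    and j: "j \<le> k" "j = 0 \<or> th j \<le> x" "j = k \<or> x < th (Suc j)"
  shows "\<bar>F x - G x\<bar> \<le> max (d j) (d (Suc j))"
proof -
  have Gx: "G x = (\<Sum>l=1..j. d l)" by (rule G_eq[OF j])
  have up: "F x \<le> G x + d (Suc j)"
  proof (cases "j = k")
    case True
    then show ?thesis using F_le_total Gx dk by simp
  next
    case False
    then have x: "x < th (Suc j)" and sj: "Suc j \<in> {1..k}" using j by auto
    have "F x \<le> F (th (Suc j))" using x by (intro F_mono) auto
    also have "\<dots> \<le> (\<Sum>l=1..Suc j. d l)" using upper[OF sj] by (simp add: F_def)
    finally show ?thesis using Gx by simp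
  qed
  have lo: "G x - d j \<le> F x"
  proof (cases "j = 0")
    case True
    then show ?thesis using Gx d0 F_nonneg by simp
  next
    case False
    then have jj: "j \<in> {1..k}" and x: "th j \<le> x" using j by auto
    have "(\<Sum>l=1..k. d l) = (\<Sum>l\<in>{1..<j}. d l) + (\<Sum>l=j..k. d l)"
    proof -
      have "{1..k} = {1..<j} \<union> {j..k}" using jj by auto
      then show ?thesis by (subst sum.union_disjoint[symmetric]) auto
    qed
    moreover have "(\<Sum>l=1..j. d l) = (\<Sum>l\<in>{1..<j}. d l) + d j"
    proof -
      have "{1..j} = insert j {1..<j}" using jj by auto
      then show ?thesis by simp
    qed
    ultimately show ?thesis using F_lower[OF jj x] Gx by linarith
  qed
  have "d j \<ge> 0" "d (Suc j) \<ge> 0" using d_nonneg[OF d0 dk] j(1) by auto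
  then show ?thesis unfolding abs_le_iff using up lo max.cobounded1[of "d j" "d (Suc j)"]
      max.cobounded2[of "d (Suc j)" "d j"] by linarith
qed

lemma exists_bracket: "\<exists>j\<le>k. (j = 0 \<or> th j \<le> x) \<and> (j = k \<or> x < th (Suc j))"
proof (cases "x < th 1")
  case True then show ?thesis by (intro exI[of _ 0]) auto
next
  case False
  show ?thesis
  proof (cases "th k \<le> x")
    case True then show ?thesis by (intro exI[of _ k]) auto
  next
    case nk: False
    then have "1 < k" using False by (metis One_nat_def k1 le_neq_implies_less linorder_le_less_linear)
    then obtain l where l: "l \<in> {1..<k}" "th l \<le> x" "x \<le> th (Suc l)"
      using find_interval[of 1 k x] False nk by auto
    show ?thesis
    proof (cases "x = th (Suc l)")
      case False
      then show ?thesis using l by (intro exI[of _ l]) auto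
    next
      case True
      then have "Suc l \<noteq> k" using nk by auto
      then have "Suc l < k" using l by auto
      then have "x < th (Suc (Suc l))" using True incr l by auto
      then show ?thesis using True l by (intro exI[of _ "Suc l"]) auto
    qed
  qed
qed

lemma KS_pt:
  assumes d0: "d 0 = 0" and dk: "d (Suc k) = 0"
  shows "\<bar>F x - G x\<bar> \<le> Max (d ` {1..k})"
proof -
  obtain j where j: "j \<le> k" "j = 0 \<or> th j \<le> x" "j = k \<or> x < th (Suc j)"
    using exists_bracket by blast
  have M: "d l \<le> Max (d ` {1..k})" if "l \<le> Suc k" for l
  proof (cases "l \<in> {1..k}")
    case True then show ?thesis by (intro Max_ge) auto
  next
    case False
    then have "l = 0 \<or> l = Suc k" using that by auto
    then have "d l = 0" using d0 dk by auto
    moreover have "d 1 \<le> Max (d ` {1..k})" using k1 by (intro Max_ge) auto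
    moreover have "d 1 > 0" using dpos k1 by auto
    ultimately show ?thesis by simp
  qed
  show ?thesis using bracket[OF d0 dk j] M[of j] M[of "Suc j"] j(1) by simp
qed

lemma nodes_in:
  assumes L: "L \<subseteq> {a..b}"
  shows "a \<le> th 1" "th k \<le> b"
proof -
  have k1': "1 \<in> {1..k}" "k \<in> {1..k}" using k1 by auto
  have dl: "degree ([:- a, 1:] * (lag 1)^2) < 2*k" "degree ([:b, -1:] * (lag k)^2) < 2*k"
  proof -
    have "degree ([:- a, 1:] * (lag 1)^2) \<le> degree [:- a, 1:] + degree ((lag 1)^2)" by (rule degree_mult_le)
    also have "\<dots> \<le> 1 + 2 * (k - 1)" using degree_lag[OF k1'(1)] lag_nz[OF k1'(1)] by (intro add_mono) (auto simp: degree_power_eq)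
    finally show "degree ([:- a, 1:] * (lag 1)^2) < 2*k" using k1 by simp
    have "degree ([:b, -1:] * (lag k)^2) \<le> degree [:b, -1:] + degree ((lag k)^2)" by (rule degree_mult_le)
    also have "\<dots> \<le> 1 + 2 * (k - 1)" using degree_lag[OF k1'(2)] lag_nz[OF k1'(2)] by (intro add_mono) (auto simp: degree_power_eq)
    finally show "degree ([:b, -1:] * (lag k)^2) < 2*k" using k1 by simp
  qed
  have s1: "(\<Sum>j=1..k. d j * poly ([:- a, 1:] * (lag 1)^2) (th j)) = d 1 * (th 1 - a)"
  proof -
    have "(\<Sum>j=1..k. d j * poly ([:- a, 1:] * (lag 1)^2) (th j)) = (\<Sum>j=1..k. if j = 1 then d 1 * (th 1 - a) else 0)"
      by (intro sum.cong refl) (auto simp: poly_lag k1'(1))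
    then show ?thesis using k1 by simp
  qed
  have "(\<Sum>y\<in>L. w y * poly ([:- a, 1:] * (lag 1)^2) y) \<ge> 0"
  proof (intro sum_nonneg)
    fix y assume y: "y \<in> L"
    have "0 \<le> w y * ((y - a) * (poly (lag 1) y)^2)" using wnn L y by (intro mult_nonneg_nonneg) auto
    then show "0 \<le> w y * poly ([:- a, 1:] * (lag 1)^2) y" by (simp add: algebra_simps)
  qed
  then have "d 1 * (th 1 - a) \<ge> 0" using quad_poly[OF dl(1)] s1 by simp
  moreover have "d 1 > 0" using dpos k1 by auto
  ultimately show "a \<le> th 1" by (simp add: zero_le_mult_iff)
  have s2: "(\<Sum>j=1..k. d j * poly ([:b, -1:] * (lag k)^2) (th j)) = d k * (b - th k)"
  proof -
    have "(\<Sum>j=1..k. d j * poly ([:b, -1:] * (lag k)^2) (th j)) = (\<Sum>j=1..k. if j = k then d k * (b - th k) else 0)"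
      by (intro sum.cong refl) (auto simp: poly_lag k1'(2))
    then show ?thesis using k1 by simp
  qed
  have "(\<Sum>y\<in>L. w y * poly ([:b, -1:] * (lag k)^2) y) \<ge> 0"
  proof (intro sum_nonneg)
    fix y assume y: "y \<in> L"
    have "0 \<le> w y * ((b - y) * (poly (lag k) y)^2)" using wnn L y by (intro mult_nonneg_nonneg) auto
    then show "0 \<le> w y * poly ([:b, -1:] * (lag k)^2) y" by (simp add: algebra_simps)
  qed
  then have "d k * (b - th k) \<ge> 0" using quad_poly[OF dl(2)] s2 by simp
  moreover have "d k > 0" using dpos k1 by auto
  ultimately show "th k \<le> b" by (simp add: zero_le_mult_iff)
qed

lemma W_pt:
  assumes L: "L \<subseteq> {a..b}" and th0: "th 0 = a" and thk: "th (Suc k) = b"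
    and d0: "d 0 = 0" and dk: "d (Suc k) = 0"
  shows "\<bar>F x - G x\<bar> \<le> (\<Sum>j=0..k. max (d j) (d (Suc j)) * (if th j \<le> x \<and> x < th (Suc j) then 1 else 0))"
proof -
  have nn: "\<And>j. j \<le> k \<Longrightarrow> 0 \<le> max (d j) (d (Suc j))" using d_nonneg[OF d0 dk]
    by (simp add: le_max_iff_disj)
  have RHS: "0 \<le> (\<Sum>j=0..k. max (d j) (d (Suc j)) * (if th j \<le> x \<and> x < th (Suc j) then 1 else 0))"
    using nn by (intro sum_nonneg) auto
  note ab = nodes_in[OF L]
  consider "x < a" | "b \<le> x" | "a \<le> x" "x < b" by linarith
  then show ?thesis
  proof cases
    case 1
    have "F x = 0" unfolding F_def using L 1 by (intro sum.neutral) auto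
    moreover have "G x = 0" unfolding G_def
    proof (intro sum.neutral ballI)
      fix l assume l: "l \<in> {1..k}"
      have "th 1 \<le> th l" using l by (intro th_le) auto
      then show "d l * (if th l \<le> x then 1 else 0) = 0" using 1 ab by auto
    qed
    ultimately show ?thesis using RHS by simp
  next
    case 2
    have "F x = (\<Sum>y\<in>L. w y)" unfolding F_def using L 2 by (intro sum.cong) auto
    moreover have "G x = (\<Sum>l=1..k. d l)" unfolding G_def
    proof (intro sum.cong refl)
      fix l assume l: "l \<in> {1..k}"
      have "th l \<le> th k" using l by (intro th_le) auto
      then show "d l * (if th l \<le> x then 1 else 0) = d l" using 2 ab by auto
    qed
    ultimately show ?thesis using RHS total by simp
  next
    case 3
    obtain j where j: "j \<le> k" "j = 0 \<or> th j \<le> x" "j = k \<or> x < th (Suc j)"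
      using exists_bracket by blast
    have in_j: "th j \<le> x \<and> x < th (Suc j)" using j 3 th0 thk by auto
    have "\<bar>F x - G x\<bar> \<le> max (d j) (d (Suc j)) * (if th j \<le> x \<and> x < th (Suc j) then 1 else 0)"
      using bracket[OF d0 dk j] in_j by simp
    also have "\<dots> \<le> (\<Sum>j=0..k. max (d j) (d (Suc j)) * (if th j \<le> x \<and> x < th (Suc j) then 1 else 0))"
      using j(1) nn by (intro member_le_sum) auto
    finally show ?thesis .
  qed
qed

end


lemma sym_dot:
  fixes A :: "real^'n^'n"
  assumes "transpose A = A"
  shows "(A *v x) \<bullet> y = x \<bullet> (A *v y)"
proof -
  have "(A *v x) \<bullet> y = (x v* transpose A) \<bullet> y" by simp
  also have "\<dots> = x \<bullet> (transpose A *v y)" by (rule dot_lmul_matrix)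
  finally show ?thesis using assms by simp
qed

lemma quad_zero:
  fixes B K :: real
  assumes "\<forall>t. 2 * t * B \<le> t^2 * K"
  shows "B = 0"
proof (rule ccontr)
  assume B: "B \<noteq> 0"
  define s where "s = \<bar>K\<bar> + 1"
  define t where "t = B / (2 * s)"
  have pos: "\<bar>K\<bar> + 1 > 0" by simp
  have "2 * t * B \<le> t^2 * K" using assms by blast
  also have "\<dots> \<le> t^2 * \<bar>K\<bar>" by (simp add: mult_left_mono)
  finally have h: "2 * t * B \<le> t^2 * \<bar>K\<bar>" .
  have sp: "s > 0" and Ks: "\<bar>K\<bar> \<le> s" unfolding s_def by auto
  have "2 * t * B = B^2 / s" unfolding t_def using sp by (simp add: power2_eq_square field_simps)
  moreover have "t^2 * \<bar>K\<bar> \<le> t^2 * s" using Ks by (simp add: mult_left_mono)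
  moreover have "t^2 * s = B^2 / (4 * s)" unfolding t_def using sp by (simp add: power2_eq_square field_simps)
  ultimately have "B^2 / s \<le> B^2 / (4 * s)" using h by linarith
  moreover have "B^2 > 0" using B by simp
  ultimately have "B^2 / s \<le> (B^2 / s) / 4" by simp
  moreover have "B^2 / s > 0" using \<open>B^2 > 0\<close> sp by simp
  ultimately show False by simp
qed

lemma expand_aux:
  fixes c t X Y Z W :: real
  shows "c + 2*t*X + t^2*W \<le> c*(1 + 2*t*Y + t^2*Z) \<Longrightarrow> 2*t*(X - c*Y) \<le> t^2*(c*Z - W)"
  by (simp add: algebra_simps)

definition eigs :: "real^'n^'n \<Rightarrow> (real^'n) set" where
  "eigs A = {u. \<exists>c. A *v u = c *\<^sub>R u}"

lemma invariant_sub_span: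
  fixes A :: "real^'n^'n"
  assumes symm: "transpose A = A"
  shows "subspace S \<Longrightarrow> (\<forall>x\<in>S. A *v x \<in> S) \<Longrightarrow> S \<subseteq> span (eigs A)"
proof (induction "dim S" arbitrary: S rule: less_induct)
  case less
  show ?case
  proof (cases "S \<subseteq> {0}")
    case True then show ?thesis using span_zero by auto
  next
    case False
    then obtain x0 where x0: "x0 \<in> S" "x0 \<noteq> 0" by auto
    define K where "K = S \<inter> sphere 0 1"
    have "compact (sphere (0::real^'n) 1 \<inter> S)"
      by (rule compact_Int_closed[OF compact_sphere closed_subspace[OF less.prems(1)]])
    then have "compact K" unfolding K_def by (simp add: Int_commute)
    moreover have "K \<noteq> {}"
    proof -
      have "(1 / norm x0) *\<^sub>R x0 \<in> K" using x0 less.prems(1) by (auto simp: K_def subspace_scale)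
      then show ?thesis by auto
    qed
    moreover have "continuous_on K (\<lambda>u. u \<bullet> (A *v u))"
      by (intro continuous_intros linear_continuous_on) (auto intro: bounded_linear_intros)
    ultimately obtain u where u: "u \<in> K" "\<forall>y\<in>K. y \<bullet> (A *v y) \<le> u \<bullet> (A *v u)"
      using continuous_attains_sup by blast
    define c where "c = u \<bullet> (A *v u)"
    have uS: "u \<in> S" and un: "norm u = 1" using u by (auto simp: K_def)
    have uu: "u \<bullet> u = 1" using un by (simp add: norm_eq_1)
    have ray: "y \<bullet> (A *v y) \<le> c * (y \<bullet> y)" if y: "y \<in> S" for y
    proof (cases "y = 0")
      case True then show ?thesis by (simp add: matrix_vector_mult_0_right)
    next
      case False
      define z where "z = (1 / norm y) *\<^sub>R y"
      have "z \<in> K" using y False less.prems(1) by (auto simp: K_def z_def subspace_scale)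
      then have "z \<bullet> (A *v z) \<le> c" using u c_def by auto
      moreover have "z \<bullet> (A *v z) = (y \<bullet> (A *v y)) / (y \<bullet> y)"
        using False by (simp add: z_def matrix_vector_mult_scaleR power2_norm_eq_inner[symmetric] power2_eq_square)
      moreover have "y \<bullet> y > 0" using False by simp
      ultimately show ?thesis by (simp add: divide_le_eq mult.commute)
    qed
    have orth: "w \<bullet> (A *v u) = c * (w \<bullet> u)" if w: "w \<in> S" for w
    proof -
      have "\<forall>t. 2 * t * (w \<bullet> (A *v u) - c * (w \<bullet> u)) \<le> t^2 * (c * (w \<bullet> w) - w \<bullet> (A *v w))"
      proof
        fix t :: real
        have "u + t *\<^sub>R w \<in> S" using uS w less.prems(1) by (simp add: subspace_add subspace_scale)
        then have h: "(u + t *\<^sub>R w) \<bullet> (A *v (u + t *\<^sub>R w)) \<le> c * ((u + t *\<^sub>R w) \<bullet> (u + t *\<^sub>R w))"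
          by (rule ray)
        have s: "u \<bullet> (A *v w) = w \<bullet> (A *v u)" using sym_dot[OF symm, of w u] by (simp add: inner_commute)
        have "(u + t *\<^sub>R w) \<bullet> (A *v (u + t *\<^sub>R w)) = c + 2 * t * (w \<bullet> (A *v u)) + t^2 * (w \<bullet> (A *v w))"
          using s by (simp add: matrix_vector_right_distrib matrix_vector_mult_scaleR inner_add_left inner_add_right
              c_def power2_eq_square algebra_simps)
        moreover have "(u + t *\<^sub>R w) \<bullet> (u + t *\<^sub>R w) = 1 + 2 * t * (w \<bullet> u) + t^2 * (w \<bullet> w)"
          using uu by (simp add: inner_add_left inner_add_right power2_eq_square inner_commute algebra_simps)
        ultimately show "2 * t * (w \<bullet> (A *v u) - c * (w \<bullet> u)) \<le> t^2 * (c * (w \<bullet> w) - w \<bullet> (A *v w))"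
          using h by (intro expand_aux) simp
      qed
      from quad_zero[OF this] show ?thesis by simp
    qed
    have eig: "A *v u = c *\<^sub>R u"
    proof -
      define r where "r = A *v u - c *\<^sub>R u"
      have "A *v u \<in> S" using less.prems(2) uS by blast
      then have rS: "r \<in> S" using uS less.prems(1) unfolding r_def by (simp add: subspace_diff subspace_scale)
      have "r \<bullet> r = r \<bullet> (A *v u) - c * (r \<bullet> u)" unfolding r_def by (simp add: inner_diff_right)
      also have "\<dots> = 0" using orth[OF rS] by simp
      finally show ?thesis unfolding r_def by simp
    qed
    define S' where "S' = {x\<in>S. x \<bullet> u = 0}"
    have sub': "subspace S'"
      using less.prems(1) unfolding S'_def subspace_def by (auto simp: inner_add_left)
    have inv': "\<forall>x\<in>S'. A *v x \<in> S'"
    proof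
      fix x assume x: "x \<in> S'"
      have "(A *v x) \<bullet> u = x \<bullet> (A *v u)" by (rule sym_dot[OF symm])
      also have "\<dots> = 0" using x eig by (simp add: S'_def)
      finally show "A *v x \<in> S'" using x less.prems(2) by (auto simp: S'_def)
    qed
    have "dim S' < dim S"
    proof (rule dim_psubset)
      have "u \<notin> S'" using uu by (simp add: S'_def)
      moreover have "S' \<subseteq> S" by (auto simp: S'_def)
      ultimately have "S' \<subset> S" using uS by blast
      moreover have e1: "span S' = S'" using sub' by (rule span_eq_iff[THEN iffD2])
      moreover have e2: "span S = S" using less.prems(1) by (rule span_eq_iff[THEN iffD2])
      ultimately show "span S' \<subset> span S" unfolding e1 e2 by blast
    qed
    then have IH: "S' \<subseteq> span (eigs A)" using less.hyps sub' inv' by blast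
    have ue: "u \<in> span (eigs A)" using eig by (intro span_base) (auto simp: eigs_def)
    show ?thesis
    proof
      fix x assume x: "x \<in> S"
      have "x - (x \<bullet> u) *\<^sub>R u \<in> S'"
        using x uS uu less.prems(1) by (auto simp: S'_def subspace_diff subspace_scale inner_diff_left)
      then have "x - (x \<bullet> u) *\<^sub>R u \<in> span (eigs A)" using IH by blast
      moreover have "(x \<bullet> u) *\<^sub>R u \<in> span (eigs A)" using ue by (rule span_scale)
      ultimately have "(x - (x \<bullet> u) *\<^sub>R u) + (x \<bullet> u) *\<^sub>R u \<in> span (eigs A)" by (rule span_add)
      then show "x \<in> span (eigs A)" by simp
    qed
  qed
qed

lemma span_eigs:
  fixes A :: "real^'n^'n"
  assumes symm: "transpose A = A"
  shows "span (eigs A) = UNIV"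
  using invariant_sub_span[OF symm, of UNIV] by auto

lemma eig_orth:
  fixes A :: "real^'n^'n"
  assumes symm: "transpose A = A" and x: "A *v x = l *\<^sub>R x" and y: "A *v y = m *\<^sub>R y" and lm: "l \<noteq> m"
  shows "x \<bullet> y = 0"
proof -
  have "l * (x \<bullet> y) = (A *v x) \<bullet> y" using x by simp
  also have "\<dots> = x \<bullet> (A *v y)" by (rule sym_dot[OF symm])
  also have "\<dots> = m * (x \<bullet> y)" using y by simp
  finally show ?thesis using lm by simp
qed

lemma mv_sum: "(A::real^'n^'n) *v (\<Sum>i\<in>S. f i) = (\<Sum>i\<in>S. A *v f i)"
  by (rule real_vector.linear_sum[OF matrix_vector_mul_linear])

lemma eig_decomp:
  fixes A :: "real^'n^'n" and v :: "real^'n"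
  assumes symm: "transpose A = A"
  shows "\<exists>Lam comp. finite Lam \<and> (\<forall>l\<in>Lam. A *v comp l = l *\<^sub>R comp l \<and> comp l \<noteq> 0) \<and>
           v = (\<Sum>l\<in>Lam. comp l)"
proof -
  have "v \<in> span (eigs A)" using span_eigs[OF symm] by simp
  then obtain t r where t: "finite t" "t \<subseteq> eigs A" and v: "v = (\<Sum>a\<in>t. r a *\<^sub>R a)"
    unfolding real_vector.span_explicit by blast
  define ev where "ev e = (SOME c. A *v e = c *\<^sub>R e)" for e
  have ev: "A *v e = ev e *\<^sub>R e" if "e \<in> t" for e
    using that t(2) unfolding ev_def eigs_def by (auto intro: someI_ex)
  define comp where "comp l = (\<Sum>e\<in>{e\<in>t. ev e = l}. r e *\<^sub>R e)" for l
  have v2: "v = (\<Sum>l\<in>ev ` t. comp l)"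
    unfolding v comp_def by (rule sum.image_gen[OF t(1)])
  have eigc: "A *v comp l = l *\<^sub>R comp l" for l
  proof -
    have "A *v comp l = (\<Sum>e\<in>{e\<in>t. ev e = l}. A *v (r e *\<^sub>R e))" unfolding comp_def by (rule mv_sum)
    also have "\<dots> = (\<Sum>e\<in>{e\<in>t. ev e = l}. l *\<^sub>R (r e *\<^sub>R e))"
      by (intro sum.cong refl) (auto simp: matrix_vector_mult_scaleR ev)
    also have "\<dots> = l *\<^sub>R comp l" unfolding comp_def by (simp add: scaleR_sum_right)
    finally show ?thesis .
  qed
  define Lam where "Lam = {l\<in>ev ` t. comp l \<noteq> 0}"
  have "v = (\<Sum>l\<in>Lam. comp l)"
    unfolding v2 Lam_def using t(1) by (intro sum.mono_neutral_right) auto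
  then show ?thesis using eigc t(1) by (intro exI[of _ Lam] exI[of _ comp]) (auto simp: Lam_def)
qed

lemma sum_dot_orth:
  fixes comp :: "real \<Rightarrow> real^'n"
  assumes "finite Lam" "l \<in> Lam" "\<forall>a\<in>Lam. \<forall>b\<in>Lam. a \<noteq> b \<longrightarrow> comp a \<bullet> comp b = 0"
  shows "(\<Sum>m\<in>Lam. comp m) \<bullet> comp l = comp l \<bullet> comp l"
proof -
  have "(\<Sum>m\<in>Lam. comp m) \<bullet> comp l = (\<Sum>m\<in>Lam. comp m \<bullet> comp l)" by (simp add: inner_sum_left)
  also have "\<dots> = comp l \<bullet> comp l"
    using assms by (subst sum.remove[of _ l]) (auto intro!: sum.neutral)
  finally show ?thesis .
qed

lemma cesm_moments:
  fixes A :: "real^'n^'n" and v :: "real^'n"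
  assumes symm: "transpose A = A"
    and a_le: "\<And>c u. u \<noteq> 0 \<Longrightarrow> A *v u = c *\<^sub>R u \<Longrightarrow> a \<le> c"
    and b_ge: "\<And>c u. u \<noteq> 0 \<Longrightarrow> A *v u = c *\<^sub>R u \<Longrightarrow> c \<le> b"
  shows "\<exists>Lam w. finite Lam \<and> Lam \<subseteq> {a..b} \<and> (\<forall>l\<in>Lam. w l \<ge> 0) \<and>
           (\<forall>x. cesm A v x = (\<Sum>y\<in>{y\<in>Lam. y \<le> x}. w y)) \<and>
           (\<forall>m. v \<bullet> (((*v) A ^^ m) v) = (\<Sum>y\<in>Lam. w y * y ^ m))"
proof -
  obtain Lam comp where H: "finite Lam \<and> (\<forall>l\<in>Lam. A *v comp l = l *\<^sub>R comp l \<and> comp l \<noteq> 0) \<and>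
    v = (\<Sum>l\<in>Lam. comp l)"
    using eig_decomp[OF symm, of v] by (elim exE) (rule that)
  have fin: "finite Lam" and ec: "\<forall>l\<in>Lam. A *v comp l = l *\<^sub>R comp l \<and> comp l \<noteq> 0"
    and v: "v = (\<Sum>l\<in>Lam. comp l)" using H by auto
  have orth: "\<forall>a\<in>Lam. \<forall>b\<in>Lam. a \<noteq> b \<longrightarrow> comp a \<bullet> comp b = 0"
  proof (intro ballI impI)
    fix a b assume "a \<in> Lam" "b \<in> Lam" "a \<noteq> b"
    then show "comp a \<bullet> comp b = 0" using ec by (intro eig_orth[OF symm, of _ a _ b]) auto
  qed
  define w where "w l = comp l \<bullet> comp l" for l
  have vc: "v \<bullet> comp l = w l" if "l \<in> Lam" for l
    unfolding v w_def using sum_dot_orth[OF fin that orth] .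
  have ab: "Lam \<subseteq> {a..b}"
  proof
    fix l assume "l \<in> Lam"
    then have "a \<le> l" "l \<le> b" using ec a_le[of "comp l" l] b_ge[of "comp l" l] by auto
    then show "l \<in> {a..b}" by simp
  qed
  have pw: "((*v) A ^^ m) v = (\<Sum>l\<in>Lam. (l ^ m) *\<^sub>R comp l)" for m
  proof (induction m)
    case 0 then show ?case using v by simp
  next
    case (Suc m)
    have "((*v) A ^^ Suc m) v = A *v (\<Sum>l\<in>Lam. (l ^ m) *\<^sub>R comp l)" using Suc by simp
    also have "\<dots> = (\<Sum>l\<in>Lam. A *v ((l ^ m) *\<^sub>R comp l))" by (rule mv_sum)
    also have "\<dots> = (\<Sum>l\<in>Lam. (l ^ Suc m) *\<^sub>R comp l)"
      using ec by (intro sum.cong refl) (simp add: matrix_vector_mult_scaleR)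
    finally show ?case .
  qed
  have mom: "v \<bullet> (((*v) A ^^ m) v) = (\<Sum>y\<in>Lam. w y * y ^ m)" for m
    unfolding pw inner_sum_right using vc by (intro sum.cong refl) (simp add: mult.commute)
  have proj: "spec_proj A x v = (\<Sum>l\<in>{l\<in>Lam. l \<le> x}. comp l)" for x
  proof -
    define P where "P = (\<Sum>l\<in>{l\<in>Lam. l \<le> x}. comp l)"
    have PE: "P \<in> espace_le A x"
      unfolding P_def espace_le_def
      by (intro real_vector.span_sum real_vector.span_base) (use ec in \<open>auto simp: eigvecs_le_def\<close>)
    have vP: "v - P = (\<Sum>l\<in>{l\<in>Lam. \<not> l \<le> x}. comp l)"
    proof -
      have "v = P + (\<Sum>l\<in>{l\<in>Lam. \<not> l \<le> x}. comp l)"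
        unfolding v P_def using fin by (subst sum.union_disjoint[symmetric]) (auto intro: sum.cong)
      then show ?thesis by (simp add: algebra_simps)
    qed
    have perp: "\<forall>u\<in>espace_le A x. (v - P) \<bullet> u = 0"
    proof
      fix u assume u: "u \<in> espace_le A x"
      have "orthogonal (v - P) u"
      proof (rule orthogonal_to_span)
        show "u \<in> span (eigvecs_le A x)" using u by (simp add: espace_le_def)
        fix y assume "y \<in> eigvecs_le A x"
        then obtain c where c: "c \<le> x" "A *v y = c *\<^sub>R y" by (auto simp: eigvecs_le_def)
        have "(v - P) \<bullet> y = (\<Sum>l\<in>{l\<in>Lam. \<not> l \<le> x}. comp l \<bullet> y)" unfolding vP by (simp add: inner_sum_left)
        also have "\<dots> = 0"
        proof (intro sum.neutral ballI)
          fix l assume "l \<in> {l\<in>Lam. \<not> l \<le> x}"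
          then show "comp l \<bullet> y = 0" using ec c by (intro eig_orth[OF symm, of _ l _ c]) auto
        qed
        finally show "orthogonal (v - P) y" by (simp add: orthogonal_def)
      qed
      then show "(v - P) \<bullet> u = 0" by (simp add: orthogonal_def)
    qed
    have "spec_proj A x v = P"
      unfolding spec_proj_def
    proof (rule the_equality)
      show "P \<in> espace_le A x \<and> (\<forall>u\<in>espace_le A x. (v - P) \<bullet> u = 0)" using PE perp by blast
      fix q assume q: "q \<in> espace_le A x \<and> (\<forall>u\<in>espace_le A x. (v - q) \<bullet> u = 0)"
      have dE: "P - q \<in> espace_le A x" using PE q unfolding espace_le_def by (intro real_vector.span_diff) auto
      have "(v - q) \<bullet> (P - q) = 0" using q dE by blast
      moreover have "(v - P) \<bullet> (P - q) = 0" using perp dE by blast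
      ultimately have "(P - q) \<bullet> (P - q) = 0" by (simp add: inner_diff_left algebra_simps)
      then show "q = P" by simp
    qed
    then show ?thesis unfolding P_def .
  qed
  have ces: "cesm A v x = (\<Sum>y\<in>{y\<in>Lam. y \<le> x}. w y)" for x
    unfolding cesm_def proj inner_sum_right using vc by (intro sum.cong refl) auto
  show ?thesis using fin ab ces mom by (intro exI[of _ Lam] exI[of _ w]) (auto simp: w_def)
qed


theorem theorem3:
  fixes A :: "real^'n^'n" and a b :: real and nv k :: nat
    and V :: "nat \<Rightarrow> real^'n" and \<theta> d :: "nat \<Rightarrow> nat \<Rightarrow> real"
  assumes symm: "transpose A = A"
    and a_le: "\<And>c u. u \<noteq> 0 \<Longrightarrow> A *v u = c *\<^sub>R u \<Longrightarrow> a \<le> c"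
    and b_ge: "\<And>c u. u \<noteq> 0 \<Longrightarrow> A *v u = c *\<^sub>R u \<Longrightarrow> c \<le> b"
    and nv: "nv \<ge> 1" and k: "k \<ge> 1"
    and unit: "\<And>i. i < nv \<Longrightarrow> norm (V i) = 1"
    and gq: "\<And>i. i < nv \<Longrightarrow> is_gauss_quad k A (V i) (\<theta> i) (d i)"
    and th0: "\<And>i. \<theta> i 0 = a" and thk: "\<And>i. \<theta> i (k+1) = b"
    and d0: "\<And>i. d i 0 = 0" and dk: "\<And>i. d i (k+1) = 0"
  shows "d_KS (\<lambda>x. (\<Sum>i<nv. cesm A (V i) x) / real nv)
               (\<lambda>x. (\<Sum>i<nv. atomic_cdf k (\<theta> i) (d i) x) / real nv)
           \<le> ereal ((\<Sum>i<nv. Max (d i ` {1..k})) / real nv) \<and>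
         d_W (\<lambda>x. (\<Sum>i<nv. cesm A (V i) x) / real nv)
              (\<lambda>x. (\<Sum>i<nv. atomic_cdf k (\<theta> i) (d i) x) / real nv)
           \<le> ennreal ((\<Sum>i<nv. \<Sum>j=0..k. max (d i j) (d i (j+1)) * (\<theta> i (j+1) - \<theta> i j)) / real nv)"
  proof -
  have ex: "\<forall>i. \<exists>Lam w. finite Lam \<and> Lam \<subseteq> {a..b} \<and> (\<forall>l\<in>Lam. w l \<ge> 0) \<and>
           (\<forall>x. cesm A (V i) x = (\<Sum>y\<in>{y\<in>Lam. y \<le> x}. w y)) \<and>
           (\<forall>m. V i \<bullet> (((*v) A ^^ m) (V i)) = (\<Sum>y\<in>Lam. w y * y ^ m))"
    by (intro allI cesm_moments[OF symm a_le b_ge])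
  from choice[OF ex] obtain LamF where "\<forall>i. \<exists>w. finite (LamF i) \<and> LamF i \<subseteq> {a..b} \<and> (\<forall>l\<in>LamF i. w l \<ge> 0) \<and>
           (\<forall>x. cesm A (V i) x = (\<Sum>y\<in>{y\<in>LamF i. y \<le> x}. w y)) \<and>
           (\<forall>m. V i \<bullet> (((*v) A ^^ m) (V i)) = (\<Sum>y\<in>LamF i. w y * y ^ m))" by (elim exE)
  from choice[OF this] obtain wF where LW: "\<And>i. finite (LamF i) \<and> LamF i \<subseteq> {a..b} \<and> (\<forall>l\<in>LamF i. wF i l \<ge> 0) \<and>
           (\<forall>x. cesm A (V i) x = (\<Sum>y\<in>{y\<in>LamF i. y \<le> x}. wF i y)) \<and>
           (\<forall>m. V i \<bullet> (((*v) A ^^ m) (V i)) = (\<Sum>y\<in>LamF i. wF i y * y ^ m))" by (elim exE) blast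
  define M where "M i j = max (d i j) (d i (j+1))" for i j
  define I where "I i j = {\<theta> i j..<\<theta> i (j+1)}" for i j
  define Fi where "Fi i x = cesm A (V i) x" for i x
  define Gi where "Gi i x = atomic_cdf k (\<theta> i) (d i) x" for i x
  have pt: "\<bar>Fi i x - Gi i x\<bar> \<le> Max (d i ` {1..k}) \<and>
      \<bar>Fi i x - Gi i x\<bar> \<le> (\<Sum>j=0..k. M i j * indicator (I i j) x) \<and>
      (\<forall>j\<le>k. \<theta> i j \<le> \<theta> i (j+1)) \<and> (\<forall>j\<le>k. 0 \<le> M i j)" if i: "i < nv" for i x
  proof -
    have G: "gq k (\<theta> i) (d i) (LamF i) (wF i)"
    proof
      show "1 \<le> k" by (rule k)
      show "\<forall>j\<in>{1..<k}. \<theta> i j < \<theta> i (Suc j)" using gq[OF i] by (simp add: is_gauss_quad_def)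
      show "\<forall>j\<in>{1..k}. 0 < d i j" using gq[OF i] by (simp add: is_gauss_quad_def)
      show "finite (LamF i)" using LW by blast
      show "\<forall>x\<in>LamF i. 0 \<le> wF i x" using LW by blast
      show "\<forall>m<2 * k. (\<Sum>j = 1..k. d i j * \<theta> i j ^ m) = (\<Sum>x\<in>LamF i. wF i x * x ^ m)"
        using gq[OF i] LW[of i] by (simp add: is_gauss_quad_def)
    qed
    interpret g: gq k "\<theta> i" "d i" "LamF i" "wF i" by (rule G)
    have F: "g.F x = Fi i x" using LW[of i] by (simp add: g.F_def Fi_def)
    have Gx: "g.G x = Gi i x" by (simp add: g.G_def Gi_def atomic_cdf_def)
    have d0': "d i 0 = 0" and dk': "d i (Suc k) = 0" using d0 dk by auto
    have th0': "\<theta> i 0 = a" and thk': "\<theta> i (Suc k) = b" using th0 thk by auto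
    have L: "LamF i \<subseteq> {a..b}" using LW by blast
    have ks: "\<bar>Fi i x - Gi i x\<bar> \<le> Max (d i ` {1..k})" using g.KS_pt[OF d0' dk', of x] F Gx by simp
    have "\<bar>Fi i x - Gi i x\<bar> \<le> (\<Sum>j=0..k. max (d i j) (d i (Suc j)) * (if \<theta> i j \<le> x \<and> x < \<theta> i (Suc j) then 1 else 0))"
      using g.W_pt[OF L th0' thk' d0' dk', of x] F Gx by simp
    also have "\<dots> = (\<Sum>j=0..k. M i j * indicator (I i j) x)"
      by (intro sum.cong refl) (simp add: M_def I_def indicator_def)
    finally have w: "\<bar>Fi i x - Gi i x\<bar> \<le> (\<Sum>j=0..k. M i j * indicator (I i j) x)" .
    have ord: "\<forall>j\<le>k. \<theta> i j \<le> \<theta> i (j+1)"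
    proof (intro allI impI)
      fix j assume j: "j \<le> k"
      consider "j = 0" | "j = k" | "1 \<le> j" "j < k" using j by linarith
      then show "\<theta> i j \<le> \<theta> i (j+1)"
      proof cases
        case 1 then show ?thesis using g.nodes_in(1)[OF L] th0' by simp
      next
        case 2 then show ?thesis using g.nodes_in(2)[OF L] thk' by simp
      next
        case 3 then show ?thesis using g.incr by (auto intro: less_imp_le)
      qed
    qed
    have mn: "\<forall>j\<le>k. 0 \<le> M i j" using g.d_nonneg[OF d0' dk'] by (auto simp: M_def le_max_iff_disj)
    show ?thesis using ks w ord mn by blast
  qed
  have nvp: "real nv > 0" using nv by simp
  have avg: "\<bar>(\<Sum>i<nv. Fi i x) / real nv - (\<Sum>i<nv. Gi i x) / real nv\<bar> \<le> (\<Sum>i<nv. \<bar>Fi i x - Gi i x\<bar>) / real nv" for x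
  proof -
    have "(\<Sum>i<nv. Fi i x) / real nv - (\<Sum>i<nv. Gi i x) / real nv = (\<Sum>i<nv. Fi i x - Gi i x) / real nv"
      by (simp add: sum_subtractf diff_divide_distrib)
    also have "\<bar>\<dots>\<bar> = \<bar>\<Sum>i<nv. Fi i x - Gi i x\<bar> / real nv" using nvp by simp
    also have "\<dots> \<le> (\<Sum>i<nv. \<bar>Fi i x - Gi i x\<bar>) / real nv"
      using nvp by (intro divide_right_mono sum_abs) auto
    finally show ?thesis .
  qed
  have KS: "d_KS (\<lambda>x. (\<Sum>i<nv. cesm A (V i) x) / real nv)
               (\<lambda>x. (\<Sum>i<nv. atomic_cdf k (\<theta> i) (d i) x) / real nv)
           \<le> ereal ((\<Sum>i<nv. Max (d i ` {1..k})) / real nv)"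
    unfolding d_KS_def
  proof (rule SUP_least)
    fix x
    have "\<bar>(\<Sum>i<nv. Fi i x) / real nv - (\<Sum>i<nv. Gi i x) / real nv\<bar> \<le> (\<Sum>i<nv. \<bar>Fi i x - Gi i x\<bar>) / real nv"
      by (rule avg)
    also have "\<dots> \<le> (\<Sum>i<nv. Max (d i ` {1..k})) / real nv"
      using nvp pt by (intro divide_right_mono sum_mono) auto
    finally show "ereal \<bar>(\<Sum>i<nv. cesm A (V i) x) / real nv - (\<Sum>i<nv. atomic_cdf k (\<theta> i) (d i) x) / real nv\<bar>
        \<le> ereal ((\<Sum>i<nv. Max (d i ` {1..k})) / real nv)" by (simp add: Fi_def Gi_def)
  qed
  define R where "R x = (\<Sum>i<nv. \<Sum>j=0..k. (M i j / real nv) * indicator (I i j) x)" for x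
  have ptR: "\<bar>(\<Sum>i<nv. Fi i x) / real nv - (\<Sum>i<nv. Gi i x) / real nv\<bar> \<le> R x" for x
  proof -
    have "(\<Sum>i<nv. \<bar>Fi i x - Gi i x\<bar>) / real nv \<le> (\<Sum>i<nv. \<Sum>j=0..k. M i j * indicator (I i j) x) / real nv"
      using nvp pt by (intro divide_right_mono sum_mono) auto
    also have "\<dots> = R x" unfolding R_def sum_divide_distrib by (intro sum.cong refl) simp
    finally show ?thesis using avg[of x] by linarith
  qed
  have Mnn: "0 \<le> M i j" if "i < nv" "j \<le> k" for i j using pt[OF that(1)] that(2) by blast
  have ordI: "\<theta> i j \<le> \<theta> i (j+1)" if "i < nv" "j \<le> k" for i j using pt[OF that(1)] that(2) by blast
  have eR: "ennreal (R x) = (\<Sum>i<nv. \<Sum>j=0..k. ennreal (M i j / real nv) * indicator (I i j) x)" for x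
  proof -
    have "ennreal (R x) = (\<Sum>i<nv. ennreal (\<Sum>j=0..k. (M i j / real nv) * indicator (I i j) x))"
      unfolding R_def using Mnn nvp by (intro sum_ennreal[symmetric] sum_nonneg mult_nonneg_nonneg) auto
    also have "\<dots> = (\<Sum>i<nv. \<Sum>j=0..k. ennreal ((M i j / real nv) * indicator (I i j) x))"
      using Mnn nvp by (intro sum.cong refl sum_ennreal[symmetric] mult_nonneg_nonneg) auto
    also have "\<dots> = (\<Sum>i<nv. \<Sum>j=0..k. ennreal (M i j / real nv) * indicator (I i j) x)"
      by (intro sum.cong refl) (simp add: indicator_def)
    finally show ?thesis .
  qed
  have intR: "(\<integral>\<^sup>+ x. ennreal (R x) \<partial>lborel) =
      ennreal ((\<Sum>i<nv. \<Sum>j=0..k. max (d i j) (d i (j+1)) * (\<theta> i (j+1) - \<theta> i j)) / real nv)"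
  proof -
    have "(\<integral>\<^sup>+ x. ennreal (R x) \<partial>lborel) = (\<integral>\<^sup>+ x. (\<Sum>i<nv. \<Sum>j=0..k. ennreal (M i j / real nv) * indicator (I i j) x) \<partial>lborel)"
      by (simp add: eR)
    also have "\<dots> = (\<Sum>i<nv. \<integral>\<^sup>+ x. (\<Sum>j=0..k. ennreal (M i j / real nv) * indicator (I i j) x) \<partial>lborel)"
      by (rule nn_integral_sum) (unfold I_def, measurable)
    also have "\<dots> = (\<Sum>i<nv. \<Sum>j=0..k. \<integral>\<^sup>+ x. ennreal (M i j / real nv) * indicator (I i j) x \<partial>lborel)"
      by (intro sum.cong refl nn_integral_sum) (simp add: I_def)
    also have "\<dots> = (\<Sum>i<nv. \<Sum>j=0..k. ennreal (M i j / real nv) * emeasure lborel (I i j))"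
      by (intro sum.cong refl nn_integral_cmult_indicator) (simp add: I_def)
    also have "\<dots> = (\<Sum>i<nv. \<Sum>j=0..k. ennreal (M i j / real nv * (\<theta> i (j+1) - \<theta> i j)))"
    proof (intro sum.cong refl)
      fix i j assume i: "i \<in> {..<nv}" and j: "j \<in> {0..k}"
      have o: "\<theta> i j \<le> \<theta> i (j+1)" and m: "0 \<le> M i j / real nv" using ordI Mnn nvp i j by auto
      have "ennreal (M i j / real nv) * emeasure lborel (I i j) = ennreal (M i j / real nv) * ennreal (\<theta> i (j+1) - \<theta> i j)"
        using o by (simp add: I_def)
      also have "\<dots> = ennreal (M i j / real nv * (\<theta> i (j+1) - \<theta> i j))"
        using o m by (rule ennreal_mult[symmetric, OF m, of "\<theta> i (j+1) - \<theta> i j", simplified] | simp add: ennreal_mult[symmetric])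
      finally show "ennreal (M i j / real nv) * emeasure lborel (I i j) = ennreal (M i j / real nv * (\<theta> i (j+1) - \<theta> i j))" .
    qed
    also have "\<dots> = ennreal (\<Sum>i<nv. \<Sum>j=0..k. M i j / real nv * (\<theta> i (j+1) - \<theta> i j))"
    proof -
      have nn: "0 \<le> M i j / real nv * (\<theta> i (j+1) - \<theta> i j)" if "i \<in> {..<nv}" "j \<in> {0..k}" for i j
        using ordI[of i j] Mnn[of i j] nvp that by (intro mult_nonneg_nonneg divide_nonneg_pos) auto
      have "(\<Sum>i<nv. \<Sum>j=0..k. ennreal (M i j / real nv * (\<theta> i (j+1) - \<theta> i j))) =
          (\<Sum>i<nv. ennreal (\<Sum>j=0..k. M i j / real nv * (\<theta> i (j+1) - \<theta> i j)))"
        using nn by (intro sum.cong refl sum_ennreal) auto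
      also have "\<dots> = ennreal (\<Sum>i<nv. \<Sum>j=0..k. M i j / real nv * (\<theta> i (j+1) - \<theta> i j))"
        using nn by (intro sum_ennreal sum_nonneg) auto
      finally show ?thesis .
    qed
    also have "(\<Sum>i<nv. \<Sum>j=0..k. M i j / real nv * (\<theta> i (j+1) - \<theta> i j)) =
        (\<Sum>i<nv. \<Sum>j=0..k. max (d i j) (d i (j+1)) * (\<theta> i (j+1) - \<theta> i j)) / real nv"
      by (simp add: M_def sum_divide_distrib)
    finally show ?thesis .
  qed
  have W: "d_W (\<lambda>x. (\<Sum>i<nv. cesm A (V i) x) / real nv)
              (\<lambda>x. (\<Sum>i<nv. atomic_cdf k (\<theta> i) (d i) x) / real nv)
           \<le> ennreal ((\<Sum>i<nv. \<Sum>j=0..k. max (d i j) (d i (j+1)) * (\<theta> i (j+1) - \<theta> i j)) / real nv)"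
    unfolding d_W_def intR[symmetric]
    by (intro nn_integral_mono ennreal_leI) (use ptR in \<open>simp add: Fi_def Gi_def\<close>)
  show ?thesis using KS W by blast
qed


end
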